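(* There exists an absolute constant $c>0$ such that the following holds. Let $S\subseteq\mathbb{R}^d$ be measurable, $\vec{\mu}^*\in\mathbb{R}^d$, $\vec{\Sigma}^*$ symmetric positive definite with $\int_S\mathcal{N}(\vec{\mu}^*,\vec{\Sigma}^*;\vec{x})d\vec{x}>0$, $\vec{\Theta}^*=\vec{\Sigma}^{*-1}$, $\vec{v}^*=\vec{\Sigma}^{*-1}\vec{\mu}^*$, and let $\vec{x}_1,\dots,\vec{x}_n$ be samples. Suppose $l_n$ (and hence $L_n$) is $\kappa$-strongly convex on a Euclidean ball of radius $r'>0$ around $(\vec{\Theta}^*,\vec{v}^* )$, i.e. $\nabla^2 l_n(\vec{\Theta},\vec{v})\succeq\kappa I$ for all $(\vec{\Theta},\vec{v})$ with $\|\vec{\Theta}-\vec{\Theta}^*\|_F^2+\|\vec{v}-\vec{v}^*\|_2^2\le r'^2$. Let $0<\epsilon\le r'$ and choose $\lambda$ with \[ 2\|\nabla l_n(\vec{\Theta}^*,\vec{v}^* )\|_\infty\le\lambda\le \frac{c\,\kappa\,\epsilon}{\sqrt{\mathrm{nz}(\vec{\Theta}^* )}}. \] Then every minimizer $(\tilde{\vec{\Theta}},\tilde{\vec{v}})$ of $L_n$ satisfies $\|\tilde{\vec{\Theta}}-\vec{\Theta}^*\|_F+\|\tilde{\vec{v}}-\vec{v}^*\|_2\le\epsilon$.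
   Context: Parameters $(\vec{\Theta},\vec{v})$ range over $\mathcal{S}_{d\times d}\times\mathbb{R}^d$, where $\mathcal{S}_{d\times d}$ is the space of real symmetric $d\times d$ matrices. Define $l_n(\vec{\Theta},\vec{v})=\frac1n\sum_{i=1}^n\left(\frac12\vec{x}_i^\top\vec{\Theta}\vec{x}_i-\vec{x}_i^\top\vec{v}\right)+\log\int_S\exp\left(-\frac12\vec{z}^\top\vec{\Theta}\vec{z}+\vec{z}^\top\vec{v}\right)d\vec{z}$ (finite-sample negative log-likelihood for samples from the Gaussian $\mathcal{N}(\vec{\mu}^*,\vec{\Sigma}^* )$ conditioned on $S$) and $L_n=l_n+\lambda\sum_{i\ne j}|\Theta_{ij}|$. $\nabla l_n$ is the vector of partial derivatives with respect to the entries of $\vec{\Theta}$ and of $\vec{v}$, and $\|\cdot\|_\infty$ its maximum absolute entry. $\mathrm{nz}(A)$ is the number of nonzero entries of $A$. *)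

theory Defs
  imports "HOL-Probability.Probability" "HOL-Combinatorics.Permutations"
begin

text \<open>The dimension d is a natural number (so that the absolute constant c can be
quantified before d).  Vectors of R^d are functions nat => real, matrices are
functions nat => nat => real; only the entries with indices < d matter.\<close>

definition lebd :: "nat \<Rightarrow> (nat \<Rightarrow> real) measure" where
  "lebd d = PiM {..<d} (\<lambda>_. lborel)"

definition ip :: "nat \<Rightarrow> (nat \<Rightarrow> real) \<Rightarrow> (nat \<Rightarrow> real) \<Rightarrow> real" where
  "ip d x y = (\<Sum>i<d. x i * y i)"

definition qf :: "nat \<Rightarrow> (nat \<Rightarrow> nat \<Rightarrow> real) \<Rightarrow> (nat \<Rightarrow> real) \<Rightarrow> real" where
  "qf d A x = (\<Sum>i<d. \<Sum>j<d. x i * A i j * x j)"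

definition matvec :: "nat \<Rightarrow> (nat \<Rightarrow> nat \<Rightarrow> real) \<Rightarrow> (nat \<Rightarrow> real) \<Rightarrow> (nat \<Rightarrow> real)" where
  "matvec d A x = (\<lambda>i. if i < d then (\<Sum>j<d. A i j * x j) else 0)"

definition sym_mat :: "nat \<Rightarrow> (nat \<Rightarrow> nat \<Rightarrow> real) \<Rightarrow> bool" where
  "sym_mat d A \<longleftrightarrow> (\<forall>i<d. \<forall>j<d. A i j = A j i)"

definition pos_def :: "nat \<Rightarrow> (nat \<Rightarrow> nat \<Rightarrow> real) \<Rightarrow> bool" where
  "pos_def d A \<longleftrightarrow> sym_mat d A \<and> (\<forall>x. (\<exists>i<d. x i \<noteq> 0) \<longrightarrow> qf d A x > 0)"

definition det_d :: "nat \<Rightarrow> (nat \<Rightarrow> nat \<Rightarrow> real) \<Rightarrow> real" where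
  "det_d d A = (\<Sum>p | p permutes {..<d}. of_int (sign p) * (\<Prod>i<d. A i (p i)))"

definition is_inv_d :: "nat \<Rightarrow> (nat \<Rightarrow> nat \<Rightarrow> real) \<Rightarrow> (nat \<Rightarrow> nat \<Rightarrow> real) \<Rightarrow> bool" where
  "is_inv_d d A B \<longleftrightarrow>
     (\<forall>i j. (d \<le> i \<or> d \<le> j) \<longrightarrow> B i j = 0) \<and>
     (\<forall>i<d. \<forall>j<d. (\<Sum>k<d. A i k * B k j) = (if i = j then 1 else 0)) \<and>
     (\<forall>i<d. \<forall>j<d. (\<Sum>k<d. B i k * A k j) = (if i = j then 1 else 0))"

definition mat_inv :: "nat \<Rightarrow> (nat \<Rightarrow> nat \<Rightarrow> real) \<Rightarrow> (nat \<Rightarrow> nat \<Rightarrow> real)" where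
  "mat_inv d A = (THE B. is_inv_d d A B)"

definition gauss_density ::
  "nat \<Rightarrow> (nat \<Rightarrow> real) \<Rightarrow> (nat \<Rightarrow> nat \<Rightarrow> real) \<Rightarrow> (nat \<Rightarrow> real) \<Rightarrow> real" where
  "gauss_density d \<mu> \<Sigma> x =
     (2 * pi) powr (- real d / 2) * det_d d \<Sigma> powr (-1/2) *
     exp (- (1/2) * qf d (mat_inv d \<Sigma>) (\<lambda>i. x i - \<mu> i))"

definition frob :: "nat \<Rightarrow> (nat \<Rightarrow> nat \<Rightarrow> real) \<Rightarrow> real" where
  "frob d A = sqrt (\<Sum>i<d. \<Sum>j<d. (A i j)\<^sup>2)"

definition norm2 :: "nat \<Rightarrow> (nat \<Rightarrow> real) \<Rightarrow> real" where
  "norm2 d v = sqrt (\<Sum>i<d. (v i)\<^sup>2)"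

text \<open>Finite-sample negative log-likelihood l_n, valued in the extended reals
(it is +infinity where the normalizing integral diverges).  Samples x_1..x_n.\<close>
definition log_part :: "nat \<Rightarrow> (nat \<Rightarrow> real) set \<Rightarrow> (nat \<Rightarrow> nat \<Rightarrow> real) \<Rightarrow> (nat \<Rightarrow> real) \<Rightarrow> ereal" where
  "log_part d S \<Theta> v =
     (let Z = (\<integral>\<^sup>+ z. indicator S z * ennreal (exp (- (1/2) * qf d \<Theta> z + ip d z v)) \<partial>lebd d)
      in if Z = \<infinity> then \<infinity> else if Z = 0 then - \<infinity> else ereal (ln (enn2real Z)))"

definition lnll :: "nat \<Rightarrow> (nat \<Rightarrow> real) set \<Rightarrow> nat \<Rightarrow> (nat \<Rightarrow> nat \<Rightarrow> real) \<Rightarrow>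
    (nat \<Rightarrow> nat \<Rightarrow> real) \<Rightarrow> (nat \<Rightarrow> real) \<Rightarrow> ereal" where
  "lnll d S n xs \<Theta> v =
     ereal ((1 / real n) * (\<Sum>i\<in>{1..n}. (1/2) * qf d \<Theta> (xs i) - ip d (xs i) v))
     + log_part d S \<Theta> v"

definition Lnll :: "nat \<Rightarrow> (nat \<Rightarrow> real) set \<Rightarrow> nat \<Rightarrow> (nat \<Rightarrow> nat \<Rightarrow> real) \<Rightarrow> real \<Rightarrow>
    (nat \<Rightarrow> nat \<Rightarrow> real) \<Rightarrow> (nat \<Rightarrow> real) \<Rightarrow> ereal" where
  "Lnll d S n xs lam \<Theta> v =
     lnll d S n xs \<Theta> v + ereal (lam * (\<Sum>i<d. \<Sum>j<d. if i \<noteq> j then \<bar>\<Theta> i j\<bar> else 0))"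

definition grad_inf :: "nat \<Rightarrow> ((nat \<Rightarrow> nat \<Rightarrow> real) \<Rightarrow> (nat \<Rightarrow> real) \<Rightarrow> ereal) \<Rightarrow>
    (nat \<Rightarrow> nat \<Rightarrow> real) \<Rightarrow> (nat \<Rightarrow> real) \<Rightarrow> real" where
  "grad_inf d f \<Theta> v = Max (insert 0
     ((\<lambda>(i,j). \<bar>deriv (\<lambda>t. real_of_ereal (f (\<lambda>a b. \<Theta> a b + (if a = i \<and> b = j then t else 0)) v)) 0\<bar>)
        ` ({..<d} \<times> {..<d})
      \<union> (\<lambda>i. \<bar>deriv (\<lambda>t. real_of_ereal (f \<Theta> (\<lambda>a. v a + (if a = i then t else 0)))) 0\<bar>) ` {..<d}))"

text \<open>Hessian of f at (Theta, v), taken on the space of (symmetric matrix, vector)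
pairs with the Frobenius/Euclidean inner product, is >= kappa I: f is finite near
(Theta,v) along every symmetric direction (H,w), and the second derivative of
s |-> f(Theta + s H, v + s w) at 0 is at least kappa (||H||_F^2 + ||w||^2).\<close>
definition hess_ge :: "nat \<Rightarrow> real \<Rightarrow> ((nat \<Rightarrow> nat \<Rightarrow> real) \<Rightarrow> (nat \<Rightarrow> real) \<Rightarrow> ereal) \<Rightarrow>
    (nat \<Rightarrow> nat \<Rightarrow> real) \<Rightarrow> (nat \<Rightarrow> real) \<Rightarrow> bool" where
  "hess_ge d \<kappa> f \<Theta> v \<longleftrightarrow>
     (\<forall>H w. sym_mat d H \<longrightarrow>
        (let \<phi> = (\<lambda>s. f (\<lambda>a b. \<Theta> a b + s * H a b) (\<lambda>a. v a + s * w a)) in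
         (\<forall>\<^sub>F s in nhds 0. \<bar>\<phi> s\<bar> \<noteq> \<infinity>) \<and>
         (\<exists>\<phi>1 \<phi>2. (\<forall>\<^sub>F s in nhds 0. ((\<lambda>t. real_of_ereal (\<phi> t)) has_real_derivative \<phi>1 s) (at s)) \<and>
                  (\<phi>1 has_real_derivative \<phi>2) (at 0) \<and>
                  \<phi>2 \<ge> \<kappa> * ((frob d H)\<^sup>2 + (norm2 d w)\<^sup>2))))"

definition nz :: "nat \<Rightarrow> (nat \<Rightarrow> nat \<Rightarrow> real) \<Rightarrow> nat" where
  "nz d A = card {(i,j). i < d \<and> j < d \<and> A i j \<noteq> 0}"

end

theory Submission
  imports Defs "Jordan_Normal_Form.Determinant"
begin


lemma inv_exists:
  assumes pd: "pos_def d A"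
  shows "\<exists>B. is_inv_d d A B"
proof -
  define M where "M = mat d d (\<lambda>(i,j). A i j)"
  have Mc: "M \<in> carrier_mat d d" unfolding M_def by simp
  have "det M \<noteq> 0"
  proof
    assume "det M = 0"
    then obtain v where v: "v \<in> carrier_vec d" "v \<noteq> 0\<^sub>v d" "M *\<^sub>v v = 0\<^sub>v d"
      using det_0_iff_vec_prod_zero[OF Mc] by auto
    define x where "x = (\<lambda>i. if i < d then v $ i else 0)"
    have "\<exists>i<d. x i \<noteq> 0"
    proof (rule ccontr)
      assume "\<not> ?thesis"
      hence "v = 0\<^sub>v d" using v(1) by (intro eq_vecI) (auto simp: x_def split: if_splits)
      with v show False by auto
    qed
    hence pos: "qf d A x > 0" using pd unfolding pos_def_def by auto
    have "\<And>i. i < d \<Longrightarrow> (\<Sum>j<d. A i j * x j) = 0"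
    proof -
      fix i assume i: "i < d"
      have "(M *\<^sub>v v) $ i = 0" using v(3) i by simp
      thus "(\<Sum>j<d. A i j * x j) = 0" using i v(1) Mc
        by (simp add: M_def x_def mult_mat_vec_def scalar_prod_def lessThan_atLeast0)
    qed
    hence "qf d A x = 0" unfolding qf_def
      by (simp add: mult.assoc sum_distrib_left[symmetric])
    with pos show False by simp
  qed
  from det_non_zero_imp_unit[OF Mc this, of "()"]
  obtain B where B: "B \<in> carrier_mat d d" "B * M = 1\<^sub>m d" "M * B = 1\<^sub>m d"
    unfolding Units_def by (auto simp: ring_mat_def)
  define B' where "B' = (\<lambda>i j. if i < d \<and> j < d then B $$ (i,j) else 0)"
  have "is_inv_d d A B'"
    unfolding is_inv_d_def
  proof (intro conjI allI impI)
    fix i j assume "d \<le> i \<or> d \<le> j" thus "B' i j = 0" by (auto simp: B'_def)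
  next
    fix i j assume ij: "i < d" "j < d"
    have "(M * B) $$ (i,j) = (if i = j then 1 else 0)" using B(3) ij by simp
    thus "(\<Sum>k<d. A i k * B' k j) = (if i = j then 1 else 0)" using ij B(1) Mc
      by (auto simp: M_def B'_def scalar_prod_def lessThan_atLeast0 col_def row_def intro!: sum.cong)
  next
    fix i j assume ij: "i < d" "j < d"
    have "(B * M) $$ (i,j) = (if i = j then 1 else 0)" using B(2) ij by simp
    thus "(\<Sum>k<d. B' i k * A k j) = (if i = j then 1 else 0)" using ij B(1) Mc
      by (auto simp: M_def B'_def scalar_prod_def lessThan_atLeast0 col_def row_def intro!: sum.cong)
  qed
  thus ?thesis by blast
qed

lemma is_inv_dD:
  assumes "is_inv_d d A B"
  shows "\<And>i j. d \<le> i \<or> d \<le> j \<Longrightarrow> B i j = 0"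
    "\<And>i j. i < d \<Longrightarrow> j < d \<Longrightarrow> (\<Sum>k<d. A i k * B k j) = (if i = j then 1 else 0)"
    "\<And>i j. i < d \<Longrightarrow> j < d \<Longrightarrow> (\<Sum>k<d. B i k * A k j) = (if i = j then 1 else 0)"
  using assms unfolding is_inv_d_def by blast+

lemma delta_sum1: fixes d :: nat shows "j < d \<Longrightarrow> (\<Sum>k<d. f k * (if k = j then 1 else (0::real))) = f j"
proof -
  have "(\<Sum>k<d. f k * (if k = j then 1 else (0::real))) = (\<Sum>k<d. if k = j then f k else 0)" by (rule sum.cong) auto
  thus "j < d \<Longrightarrow> ?thesis" by simp
qed

lemma delta_sum2: fixes d :: nat shows "i < d \<Longrightarrow> (\<Sum>l<d. (if i = l then 1 else (0::real)) * f l) = f i"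
proof -
  have "(\<Sum>l<d. (if i = l then 1 else (0::real)) * f l) = (\<Sum>l<d. if i = l then f l else 0)" by (rule sum.cong) auto
  thus "i < d \<Longrightarrow> ?thesis" by simp
qed

lemma inv_unique:
  assumes B: "is_inv_d d A B" and B': "is_inv_d d A B'"
  shows "B' = B"
proof (intro ext)
  fix i j
  show "B' i j = B i j"
  proof (cases "i < d \<and> j < d")
    case True
    hence ij: "i < d" "j < d" by auto
    have "B i j = (\<Sum>k<d. B i k * (if k = j then 1 else 0))"
      using delta_sum1[OF ij(2)] by simp
    also have "\<dots> = (\<Sum>k<d. B i k * (\<Sum>l<d. A k l * B' l j))"
      by (intro sum.cong refl) (simp add: is_inv_dD(2)[OF B' _ ij(2)])
    also have "\<dots> = (\<Sum>l<d. (\<Sum>k<d. B i k * A k l) * B' l j)"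
      by (simp only: sum_distrib_left sum_distrib_right mult.assoc) (rule sum.swap)
    also have "\<dots> = (\<Sum>l<d. (if i = l then 1 else 0) * B' l j)"
      by (intro sum.cong refl) (simp add: is_inv_dD(3)[OF B ij(1)])
    also have "\<dots> = B' i j"
      using delta_sum2[OF ij(1)] by simp
    finally show ?thesis by simp
  next
    case False
    thus ?thesis using is_inv_dD(1)[OF B] is_inv_dD(1)[OF B'] by auto
  qed
qed

lemma inv_facts:
  assumes pd: "pos_def d A"
  shows "sym_mat d (mat_inv d A)" "\<forall>i<d. mat_inv d A i i > 0"
proof -
  obtain B where B: "is_inv_d d A B" using inv_exists[OF pd] by blast
  have MB: "mat_inv d A = B" unfolding mat_inv_def
    by (rule the_equality[where P="is_inv_d d A", OF B]) (rule inv_unique[OF B])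
  have symA: "\<And>i j. i < d \<Longrightarrow> j < d \<Longrightarrow> A i j = A j i" using pd unfolding pos_def_def sym_mat_def by auto
  have "is_inv_d d A (\<lambda>i j. B j i)"
    unfolding is_inv_d_def
  proof (intro conjI allI impI)
    fix i j assume "d \<le> i \<or> d \<le> j" thus "B j i = 0" using is_inv_dD(1)[OF B] by auto
  next
    fix i j assume ij: "i < d" "j < d"
    have "(\<Sum>k<d. A i k * B j k) = (\<Sum>k<d. B j k * A k i)"
      using ij symA by (intro sum.cong) auto
    also have "\<dots> = (if j = i then 1 else 0)" using is_inv_dD(3)[OF B ij(2) ij(1)] .
    finally show "(\<Sum>k<d. A i k * B j k) = (if i = j then 1 else 0)" by auto
  next
    fix i j assume ij: "i < d" "j < d"
    have "(\<Sum>k<d. B k i * A k j) = (\<Sum>k<d. A j k * B k i)"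
      using ij symA by (intro sum.cong) auto
    also have "\<dots> = (if j = i then 1 else 0)" using is_inv_dD(2)[OF B ij(2) ij(1)] .
    finally show "(\<Sum>k<d. B k i * A k j) = (if i = j then 1 else 0)" by auto
  qed
  from inv_unique[OF B this] have BT: "(\<lambda>i j. B j i) = B" .
  have Bs: "B j i = B i j" for i j using fun_cong[OF fun_cong[OF BT, of i], of j] by simp
  show "sym_mat d (mat_inv d A)" unfolding MB sym_mat_def using Bs by blast
  show "\<forall>i<d. mat_inv d A i i > 0"
  proof (intro allI impI)
    fix i assume i: "i < d"
    define x where "x = (\<lambda>k. if k < d then B k i else 0)"
    have Ax: "(\<Sum>l<d. A k l * x l) = (if k = i then 1 else 0)" if "k < d" for k
    proof -
      have "(\<Sum>l<d. A k l * x l) = (\<Sum>l<d. A k l * B l i)" by (intro sum.cong) (auto simp: x_def)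
      thus ?thesis using is_inv_dD(2)[OF B that i] by simp
    qed
    have "\<exists>k<d. x k \<noteq> 0"
    proof (rule ccontr)
      assume "\<not> ?thesis"
      hence "(\<Sum>l<d. A i l * x l) = 0" by (intro sum.neutral) auto
      with Ax[OF i] show False by simp
    qed
    hence "qf d A x > 0" using pd unfolding pos_def_def by blast
    moreover have "qf d A x = (\<Sum>k<d. x k * (\<Sum>l<d. A k l * x l))"
      unfolding qf_def by (simp add: mult.assoc sum_distrib_left)
    moreover have "\<dots> = (\<Sum>k<d. x k * (if k = i then 1 else 0))"
      by (intro sum.cong refl) (simp add: Ax)
    moreover have "\<dots> = x i" using delta_sum1[OF i] .
    ultimately show "mat_inv d A i i > 0" unfolding MB x_def using i by simp
  qed
qed



lemma taylor_lb:
  fixes g :: "real \<Rightarrow> real" and K T g1 :: real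
  assumes T: "0 \<le> T"
  and h: "\<And>s0. 0 \<le> s0 \<Longrightarrow> s0 \<le> T \<Longrightarrow> \<exists>\<phi>1 \<phi>2.
     (\<forall>\<^sub>F s in nhds 0. ((\<lambda>t. g (s0 + t)) has_real_derivative \<phi>1 s) (at s)) \<and>
     (\<phi>1 has_real_derivative \<phi>2) (at 0) \<and> \<phi>2 \<ge> K"
  and g0: "(g has_real_derivative g1) (at 0)"
  shows "g T \<ge> g 0 + T * g1 + K * T^2 / 2"
proof -
  define D where "D = deriv g"
  have shift: "((\<lambda>t. g (s + t)) has_real_derivative y) (at t) \<Longrightarrow> (g has_real_derivative y) (at (s + t))" for s t y
    using DERIV_shift[of g y t s] by (simp add: add.commute)
  have shiftD: "((\<lambda>t. D (s + t)) has_real_derivative y) (at 0) \<Longrightarrow> (D has_real_derivative y) (at s)" for s y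
    using DERIV_shift[of D y 0 s] by (simp add: add.commute)
  have d1: "(g has_real_derivative D s) (at s)" if "0 \<le> s" "s \<le> T" for s
  proof -
    from h[OF that] obtain \<phi>1 \<phi>2 where
      e: "\<forall>\<^sub>F u in nhds 0. ((\<lambda>t. g (s + t)) has_real_derivative \<phi>1 u) (at u)" by blast
    from eventually_nhds_x_imp_x[OF e] have "(g has_real_derivative \<phi>1 0) (at s)"
      using shift[of s "\<phi>1 0" 0] by simp
    thus ?thesis unfolding D_def using DERIV_imp_deriv by metis
  qed
  have d2: "\<exists>y. (D has_real_derivative y) (at s) \<and> y \<ge> K" if "0 \<le> s" "s \<le> T" for s
  proof -
    from h[OF that] obtain \<phi>1 \<phi>2 where
      e: "\<forall>\<^sub>F u in nhds 0. ((\<lambda>t. g (s + t)) has_real_derivative \<phi>1 u) (at u)"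
      and p: "(\<phi>1 has_real_derivative \<phi>2) (at 0)" and K: "\<phi>2 \<ge> K" by blast
    have "\<forall>\<^sub>F u in nhds 0. \<phi>1 u = D (s + u)"
      using e by eventually_elim (metis D_def DERIV_imp_deriv shift)
    hence "((\<lambda>u. D (s + u)) has_real_derivative \<phi>2) (at 0)"
      using p DERIV_cong_ev[of 0 0 \<phi>1 "\<lambda>u. D (s + u)" \<phi>2 \<phi>2] by simp
    with K shiftD show ?thesis by blast
  qed
  have g1: "D 0 = g1" unfolding D_def using g0 DERIV_imp_deriv by blast
  have Dlb: "D s \<ge> g1 + K * s" if "0 \<le> s" "s \<le> T" for s
  proof -
    have "(\<lambda>x. D x - K * x) 0 \<le> (\<lambda>x. D x - K * x) s"
    proof (rule DERIV_nonneg_imp_nondecreasing[OF that(1)])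
      fix x assume "0 \<le> x" "x \<le> s"
      with that d2[of x] obtain y where "(D has_real_derivative y) (at x)" "y \<ge> K" by auto
      thus "\<exists>y. ((\<lambda>x. D x - K * x) has_real_derivative y) (at x) \<and> 0 \<le> y"
        by (intro exI[of _ "y - K"]) (auto intro!: derivative_eq_intros)
    qed
    thus ?thesis using g1 by simp
  qed
  have "(\<lambda>x. g x - g1 * x - K * x^2 / 2) 0 \<le> (\<lambda>x. g x - g1 * x - K * x^2 / 2) T"
  proof (rule DERIV_nonneg_imp_nondecreasing[OF T])
    fix x assume x: "0 \<le> x" "x \<le> T"
    show "\<exists>y. ((\<lambda>x. g x - g1 * x - K * x^2 / 2) has_real_derivative y) (at x) \<and> 0 \<le> y"
      using d1[OF x] Dlb[OF x]
      by (intro exI[of _ "D x - g1 - K * x"]) (auto intro!: derivative_eq_intros simp: power2_eq_square)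
  qed
  thus ?thesis by (simp add: algebra_simps)
qed




definition Zf :: "nat \<Rightarrow> (nat \<Rightarrow> real) set \<Rightarrow> (nat \<Rightarrow> nat \<Rightarrow> real) \<Rightarrow> (nat \<Rightarrow> real) \<Rightarrow> ennreal" where
  "Zf d S \<Theta> v = (\<integral>\<^sup>+ z. indicator S z * ennreal (exp (- (1/2) * qf d \<Theta> z + ip d z v)) \<partial>lebd d)"

definition lin :: "nat \<Rightarrow> nat \<Rightarrow> (nat \<Rightarrow> nat \<Rightarrow> real) \<Rightarrow> (nat \<Rightarrow> nat \<Rightarrow> real) \<Rightarrow> (nat \<Rightarrow> real) \<Rightarrow> real" where
  "lin d n xs \<Theta> v = (1 / real n) * (\<Sum>i\<in>{1..n}. (1/2) * qf d \<Theta> (xs i) - ip d (xs i) v)"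

lemma lnll_eq: "lnll d S n xs \<Theta> v = ereal (lin d n xs \<Theta> v) + log_part d S \<Theta> v"
  unfolding lnll_def lin_def by simp

lemma log_part_eq: "log_part d S \<Theta> v = (if Zf d S \<Theta> v = \<infinity> then \<infinity> else if Zf d S \<Theta> v = 0 then - \<infinity>
   else ereal (ln (enn2real (Zf d S \<Theta> v))))"
  unfolding log_part_def Zf_def Let_def by simp

lemma meas_qf: "(\<lambda>z. qf d \<Theta> z) \<in> borel_measurable (lebd d)"
  unfolding qf_def lebd_def
  by (intro borel_measurable_sum borel_measurable_times measurable_component_singleton
      borel_measurable_const) auto

lemma meas_ip: "(\<lambda>z. ip d z v) \<in> borel_measurable (lebd d)"
  unfolding ip_def lebd_def
  by (intro borel_measurable_sum borel_measurable_times measurable_component_singleton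
      borel_measurable_const) auto

lemma meas_int:
  assumes "S \<in> sets (lebd d)"
  shows "(\<lambda>z. indicator S z * ennreal (exp (- (1/2) * qf d \<Theta> z + ip d z v))) \<in> borel_measurable (lebd d)"
  using assms meas_qf meas_ip by measurable

lemma Zf_zero_iff:
  assumes "S \<in> sets (lebd d)"
  shows "Zf d S \<Theta> v = 0 \<longleftrightarrow> (AE z in lebd d. z \<notin> S)"
  unfolding Zf_def using nn_integral_0_iff_AE[OF meas_int[OF assms]]
  by (simp add: indicator_def)

lemma lin_comb:
  assumes Q: "\<forall>z. qf d \<Theta> z = (\<Sum>k\<in>I. \<alpha> k * qf d (\<Theta>k k) z)"
  and P: "\<forall>z. ip d z v = (\<Sum>k\<in>I. \<alpha> k * ip d z (vk k))"
  shows "lin d n xs \<Theta> v = (\<Sum>k\<in>I. \<alpha> k * lin d n xs (\<Theta>k k) (vk k))"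
proof -
  have "lin d n xs \<Theta> v = (1 / real n) * (\<Sum>i\<in>{1..n}. \<Sum>k\<in>I. \<alpha> k * ((1/2) * qf d (\<Theta>k k) (xs i) - ip d (xs i) (vk k)))"
    unfolding lin_def using Q P
    by (simp add: sum_distrib_left sum_subtractf[symmetric] algebra_simps)
  also have "\<dots> = (\<Sum>k\<in>I. \<alpha> k * lin d n xs (\<Theta>k k) (vk k))"
    unfolding lin_def sum.swap[of _ "{1..n}"]
    by (simp add: sum_distrib_left mult.assoc mult.left_commute sum.swap[of _ I])
  finally show ?thesis .
qed

lemma log_part_fin:
  assumes "\<bar>log_part d S \<Theta> v\<bar> \<noteq> \<infinity>"
  shows "Zf d S \<Theta> v = ennreal (enn2real (Zf d S \<Theta> v))" "enn2real (Zf d S \<Theta> v) > 0"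
    "log_part d S \<Theta> v = ereal (ln (enn2real (Zf d S \<Theta> v)))"
  using assms unfolding log_part_eq
  by (auto split: if_splits simp: enn2real_positive_iff less_top[symmetric] zero_less_iff_neq_zero)

lemma exp_jensen:
  fixes I :: "'i set" and \<alpha> y :: "'i \<Rightarrow> real"
  assumes I: "finite I" "I \<noteq> {}" and \<alpha>: "\<forall>k\<in>I. \<alpha> k \<ge> 0" "sum \<alpha> I = 1"
  shows "exp (\<Sum>k\<in>I. \<alpha> k * y k) \<le> (\<Sum>k\<in>I. \<alpha> k * exp (y k))"
  using convex_on_sum[OF I convex_on_exp[of 1], of \<alpha> y] \<alpha> by simp

lemma lnll_jensen:
  fixes I :: "'i set" and \<alpha> :: "'i \<Rightarrow> real"
  assumes S: "S \<in> sets (lebd d)" and I: "finite I" and \<alpha>: "\<forall>k\<in>I. \<alpha> k \<ge> 0" "sum \<alpha> I = 1"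
  and fin: "\<forall>k\<in>I. \<bar>lnll d S n xs (\<Theta>k k) (vk k)\<bar> \<noteq> \<infinity>"
  and Q: "\<forall>z. qf d \<Theta> z = (\<Sum>k\<in>I. \<alpha> k * qf d (\<Theta>k k) z)"
  and P: "\<forall>z. ip d z v = (\<Sum>k\<in>I. \<alpha> k * ip d z (vk k))"
  shows "lnll d S n xs \<Theta> v \<le> ereal (\<Sum>k\<in>I. \<alpha> k * real_of_ereal (lnll d S n xs (\<Theta>k k) (vk k)))"
proof -
  have Ine: "I \<noteq> {}" using \<alpha>(2) by auto
  define X where "X k = enn2real (Zf d S (\<Theta>k k) (vk k))" for k
  define E where "E k z = - (1/2) * qf d (\<Theta>k k) z + ip d z (vk k)" for k z
  define C where "C = exp (\<Sum>k\<in>I. \<alpha> k * ln (X k))"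
  have finlp: "\<bar>log_part d S (\<Theta>k k) (vk k)\<bar> \<noteq> \<infinity>" if "k \<in> I" for k
    using fin that unfolding lnll_eq by (cases "log_part d S (\<Theta>k k) (vk k)") auto
  have Xpos: "X k > 0" and ZX: "Zf d S (\<Theta>k k) (vk k) = ennreal (X k)"
    and lpX: "log_part d S (\<Theta>k k) (vk k) = ereal (ln (X k))" if "k \<in> I" for k
    using log_part_fin[OF finlp[OF that]] unfolding X_def by auto
  have lnllk: "real_of_ereal (lnll d S n xs (\<Theta>k k) (vk k)) = lin d n xs (\<Theta>k k) (vk k) + ln (X k)"
    if "k \<in> I" for k using lpX[OF that] unfolding lnll_eq by simp
  have Eeq: "- (1/2) * qf d \<Theta> z + ip d z v = (\<Sum>k\<in>I. \<alpha> k * E k z)" for z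
    using Q P unfolding E_def by (simp add: sum_distrib_left algebra_simps sum.distrib sum_subtractf sum_negf)
  have pw: "exp (- (1/2) * qf d \<Theta> z + ip d z v) \<le> C * (\<Sum>k\<in>I. \<alpha> k / X k * exp (E k z))" for z
  proof -
    have "exp (- (1/2) * qf d \<Theta> z + ip d z v)
        = exp (\<Sum>k\<in>I. \<alpha> k * (E k z - ln (X k))) * C"
      unfolding Eeq C_def by (simp add: exp_add[symmetric] algebra_simps sum_subtractf)
    also have "\<dots> \<le> (\<Sum>k\<in>I. \<alpha> k * exp (E k z - ln (X k))) * C"
      using exp_jensen[OF I Ine \<alpha>] unfolding C_def by (intro mult_right_mono) auto
    also have "(\<Sum>k\<in>I. \<alpha> k * exp (E k z - ln (X k))) = (\<Sum>k\<in>I. \<alpha> k / X k * exp (E k z))"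
      using Xpos by (intro sum.cong) (auto simp: exp_diff)
    finally show ?thesis by (simp add: mult.commute)
  qed
  have "Zf d S \<Theta> v \<le> (\<integral>\<^sup>+ z. (\<Sum>k\<in>I. ennreal (C * (\<alpha> k / X k)) * (indicator S z * ennreal (exp (E k z)))) \<partial>lebd d)"
    unfolding Zf_def
  proof (intro nn_integral_mono)
    fix z
    have nn: "0 \<le> C * (\<alpha> k / X k) * exp (E k z)" if "k \<in> I" for k
      using Xpos[OF that] \<alpha>(1) that unfolding C_def by auto
    have "indicator S z * ennreal (exp (- (1/2) * qf d \<Theta> z + ip d z v))
        \<le> indicator S z * ennreal (C * (\<Sum>k\<in>I. \<alpha> k / X k * exp (E k z)))"
      using pw[of z] by (intro mult_left_mono ennreal_leI) auto
    also have "\<dots> = (\<Sum>k\<in>I. ennreal (C * (\<alpha> k / X k)) * (indicator S z * ennreal (exp (E k z))))"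
    proof (cases "z \<in> S")
      case True
      have "ennreal (C * (\<Sum>k\<in>I. \<alpha> k / X k * exp (E k z))) = ennreal (\<Sum>k\<in>I. C * (\<alpha> k / X k) * exp (E k z))"
        by (simp add: sum_distrib_left mult.assoc)
      also have "\<dots> = (\<Sum>k\<in>I. ennreal (C * (\<alpha> k / X k) * exp (E k z)))"
        using nn by (simp add: sum_ennreal)
      also have "\<dots> = (\<Sum>k\<in>I. ennreal (C * (\<alpha> k / X k)) * ennreal (exp (E k z)))"
      proof (intro sum.cong refl ennreal_mult)
        fix k assume "k \<in> I"
        thus "0 \<le> C * (\<alpha> k / X k)" using Xpos[of k] \<alpha>(1) unfolding C_def
          by (intro mult_nonneg_nonneg divide_nonneg_pos) auto
      qed simp
      finally show ?thesis using True by simp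
    qed simp
    finally show "indicator S z * ennreal (exp (- (1/2) * qf d \<Theta> z + ip d z v))
        \<le> (\<Sum>k\<in>I. ennreal (C * (\<alpha> k / X k)) * (indicator S z * ennreal (exp (E k z))))" .
  qed
  also have "\<dots> = (\<Sum>k\<in>I. ennreal (C * (\<alpha> k / X k)) * Zf d S (\<Theta>k k) (vk k))"
  proof -
    have mk: "(\<lambda>z. indicator S z * ennreal (exp (E k z))) \<in> borel_measurable (lebd d)" for k
      using meas_int[OF S] unfolding E_def by simp
    have mk2: "(\<lambda>z. c * (indicator S z * ennreal (exp (E k z)))) \<in> borel_measurable (lebd d)" for k c
      using mk[of k] by measurable
    have Zk: "Zf d S (\<Theta>k k) (vk k) = (\<integral>\<^sup>+ z. indicator S z * ennreal (exp (E k z)) \<partial>lebd d)" for k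
      unfolding Zf_def E_def ..
    show ?thesis unfolding Zk
      by (subst nn_integral_sum) (auto intro!: sum.cong nn_integral_cmult mk mk2)
  qed
  also have "\<dots> = (\<Sum>k\<in>I. ennreal (C * \<alpha> k))"
  proof (intro sum.cong refl)
    fix k assume k: "k \<in> I"
    have nn: "0 \<le> C * (\<alpha> k / X k)" using Xpos[OF k] \<alpha>(1) k unfolding C_def
      by (intro mult_nonneg_nonneg divide_nonneg_pos) auto
    have "ennreal (C * (\<alpha> k / X k)) * Zf d S (\<Theta>k k) (vk k) = ennreal (C * (\<alpha> k / X k) * X k)"
      unfolding ZX[OF k] by (rule ennreal_mult[OF nn, symmetric]) (use Xpos[OF k] in simp)
    also have "C * (\<alpha> k / X k) * X k = C * \<alpha> k" using Xpos[OF k] by simp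
    finally show "ennreal (C * (\<alpha> k / X k)) * Zf d S (\<Theta>k k) (vk k) = ennreal (C * \<alpha> k)" .
  qed
  also have "\<dots> = ennreal C"
  proof -
    have "(\<Sum>k\<in>I. ennreal (C * \<alpha> k)) = ennreal (\<Sum>k\<in>I. C * \<alpha> k)"
      using \<alpha>(1) unfolding C_def by (intro sum_ennreal) auto
    also have "(\<Sum>k\<in>I. C * \<alpha> k) = C" using \<alpha>(2) by (simp only: sum_distrib_left[symmetric])
    finally show ?thesis .
  qed
  finally have Zle: "Zf d S \<Theta> v \<le> ennreal C" .
  have linc: "lin d n xs \<Theta> v = (\<Sum>k\<in>I. \<alpha> k * lin d n xs (\<Theta>k k) (vk k))"
    using lin_comb[OF Q P] .
  show ?thesis
  proof (cases "Zf d S \<Theta> v = 0")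
    case True thus ?thesis unfolding lnll_eq log_part_eq by simp
  next
    case False
    have ninf: "Zf d S \<Theta> v \<noteq> \<infinity>" using Zle by (auto simp: top_unique)
    have pos: "enn2real (Zf d S \<Theta> v) > 0" using False ninf
      by (simp add: enn2real_positive_iff less_top[symmetric] zero_less_iff_neq_zero)
    have C0: "C \<ge> 0" unfolding C_def by simp
    have "enn2real (Zf d S \<Theta> v) \<le> C"
      using enn2real_mono[OF Zle] C0 by simp
    hence "ln (enn2real (Zf d S \<Theta> v)) \<le> ln C" using pos by simp
    also have "ln C = (\<Sum>k\<in>I. \<alpha> k * ln (X k))" unfolding C_def by simp
    finally have lnle: "ln (enn2real (Zf d S \<Theta> v)) \<le> (\<Sum>k\<in>I. \<alpha> k * ln (X k))" .
    have "lnll d S n xs \<Theta> v = ereal (lin d n xs \<Theta> v + ln (enn2real (Zf d S \<Theta> v)))"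
      unfolding lnll_eq log_part_eq using False ninf by simp
    also have "\<dots> \<le> ereal (\<Sum>k\<in>I. \<alpha> k * (lin d n xs (\<Theta>k k) (vk k) + ln (X k)))"
    proof -
      have "(\<Sum>k\<in>I. \<alpha> k * (lin d n xs (\<Theta>k k) (vk k) + ln (X k)))
          = lin d n xs \<Theta> v + (\<Sum>k\<in>I. \<alpha> k * ln (X k))"
        unfolding linc by (simp add: distrib_left sum.distrib)
      thus ?thesis using lnle by simp
    qed
    also have "\<dots> = ereal (\<Sum>k\<in>I. \<alpha> k * real_of_ereal (lnll d S n xs (\<Theta>k k) (vk k)))"
      by (intro arg_cong[where f=ereal] sum.cong) (auto simp: lnllk)
    finally show ?thesis .
  qed
qed




lemma qf_add: "qf d (\<lambda>a b. A a b + B a b) z = qf d A z + qf d B z"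
  unfolding qf_def by (simp add: algebra_simps sum.distrib)

lemma qf_smult: "qf d (\<lambda>a b. s * B a b) z = s * qf d B z"
  unfolding qf_def by (simp add: algebra_simps sum_distrib_left)

lemma if_conj0: "(if P \<and> Q then x else 0) = (if P then (if Q then x else (0::real)) else 0)"
  by simp

lemma qf_single:
  assumes "i < d" "j < d"
  shows "qf d (\<lambda>a b. if a = i \<and> b = j then c else 0) z = z i * c * z j"
proof -
  have "(\<Sum>b<d. z a * (if a = i \<and> b = j then c else 0) * z b) = (if a = i then z i * c * z j else 0)" for a
    using assms by (cases "a = i") (simp_all add: if_distrib[of "\<lambda>x. _ * x"] if_distrib[of "\<lambda>x. x * _"] sum.delta cong: if_cong)
  thus ?thesis unfolding qf_def using assms by simp
qed

lemma qf_zero: "qf d (\<lambda>a b. 0) z = 0"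
  unfolding qf_def by simp

lemma ip_add: "ip d z (\<lambda>a. v a + w a) = ip d z v + ip d z w"
  unfolding ip_def by (simp add: algebra_simps sum.distrib)

lemma ip_smult: "ip d z (\<lambda>a. s * w a) = s * ip d z w"
  unfolding ip_def by (simp add: algebra_simps sum_distrib_left)

lemma ip_single: "i < d \<Longrightarrow> ip d z (\<lambda>a. if a = i then c else 0) = z i * c"
  unfolding ip_def by (simp add: if_distrib[of "\<lambda>x. _ * x"] sum.delta cong: if_cong)

lemma lnll_cong:
  assumes "\<forall>z. qf d \<Theta> z = qf d \<Theta>' z" "\<forall>z. ip d z v = ip d z v'"
  shows "lnll d S n xs \<Theta> v = lnll d S n xs \<Theta>' v'"
  unfolding lnll_def log_part_def using assms by simp




definition Tk :: "(nat \<Rightarrow> nat \<Rightarrow> real) \<Rightarrow> (nat \<times> nat) + nat \<Rightarrow> real \<Rightarrow> (nat \<Rightarrow> nat \<Rightarrow> real)" where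
  "Tk \<Theta>s k t = (case k of Inl (i,j) \<Rightarrow> (\<lambda>a b. \<Theta>s a b + (if a = i \<and> b = j then t else 0)) | Inr i \<Rightarrow> \<Theta>s)"

definition Vk :: "(nat \<Rightarrow> real) \<Rightarrow> (nat \<times> nat) + nat \<Rightarrow> real \<Rightarrow> (nat \<Rightarrow> real)" where
  "Vk vs k t = (case k of Inl _ \<Rightarrow> vs | Inr i \<Rightarrow> (\<lambda>a. vs a + (if a = i then t else 0)))"

lemma hess_use:
  assumes "hess_ge d \<kappa> f \<Theta> v" "sym_mat d H"
  shows "(\<forall>\<^sub>F s in nhds 0. \<bar>f (\<lambda>a b. \<Theta> a b + s * H a b) (\<lambda>a. v a + s * w a)\<bar> \<noteq> \<infinity>) \<and>
         (\<exists>\<phi>1 \<phi>2. (\<forall>\<^sub>F s in nhds 0. ((\<lambda>t. real_of_ereal (f (\<lambda>a b. \<Theta> a b + t * H a b) (\<lambda>a. v a + t * w a))) has_real_derivative \<phi>1 s) (at s)) \<and>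
                  (\<phi>1 has_real_derivative \<phi>2) (at 0) \<and>
                  \<phi>2 \<ge> \<kappa> * ((frob d H)\<^sup>2 + (norm2 d w)\<^sup>2))"
  using assms unfolding hess_ge_def Let_def by blast

lemma coord_deriv:
  assumes hess: "hess_ge d \<kappa> (lnll d S n xs) \<Theta>s vs"
  and k: "k \<in> ({..<d} \<times> {..<d}) <+> {..<d}"
  shows "\<exists>D. ((\<lambda>t. real_of_ereal (lnll d S n xs (Tk \<Theta>s k t) (Vk vs k t))) has_real_derivative D) (at 0)
     \<and> (\<forall>\<^sub>F t in nhds 0. \<bar>lnll d S n xs (Tk \<Theta>s k t) (Vk vs k t)\<bar> \<noteq> \<infinity>)"
proof -
  let ?f = "lnll d S n xs"
  obtain H w where Hs: "sym_mat d H" and eq: "\<And>s. ?f (\<lambda>a b. \<Theta>s a b + s * H a b) (\<lambda>a. vs a + s * w a) = ?f (Tk \<Theta>s k s) (Vk vs k s)"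
  proof (cases k)
    case (Inl p)
    then obtain i j where p: "k = Inl (i,j)" "i < d" "j < d" using k by (cases p) auto
    define H where "H = (\<lambda>a b. (if a = i \<and> b = j then 1/2 else 0) + (if a = j \<and> b = i then 1/2 else (0::real)))"
    have "H a b = H b a" for a b
      unfolding H_def by (cases "a = i"; cases "b = j"; cases "a = j"; cases "b = i") simp_all
    hence Hs: "sym_mat d H" unfolding sym_mat_def by blast
    have "?f (\<lambda>a b. \<Theta>s a b + s * H a b) (\<lambda>a. vs a + s * 0) = ?f (Tk \<Theta>s k s) (Vk vs k s)" for s
    proof (rule lnll_cong; intro allI)
      fix z
      show "qf d (\<lambda>a b. \<Theta>s a b + s * H a b) z = qf d (Tk \<Theta>s k s) z"
        unfolding Tk_def p H_def using p
        by (simp add: qf_add qf_smult qf_single algebra_simps)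
      show "ip d z (\<lambda>a. vs a + s * 0) = ip d z (Vk vs k s)"
        unfolding Vk_def p by simp
    qed
    thus ?thesis by (rule that[OF Hs])
  next
    case (Inr i)
    have Hs: "sym_mat d (\<lambda>a b. 0)" unfolding sym_mat_def by auto
    have "?f (\<lambda>a b. \<Theta>s a b + s * 0) (\<lambda>a. vs a + s * (if a = i then 1 else 0)) = ?f (Tk \<Theta>s k s) (Vk vs k s)" for s
      unfolding Tk_def Vk_def Inr by (simp add: if_distrib[of "\<lambda>x. s * x"] cong: if_cong)
    thus ?thesis by (rule that[OF Hs])
  qed
  from hess_use[OF hess Hs, of w] obtain \<phi>1 \<phi>2 where
    fin: "\<forall>\<^sub>F s in nhds 0. \<bar>?f (\<lambda>a b. \<Theta>s a b + s * H a b) (\<lambda>a. vs a + s * w a)\<bar> \<noteq> \<infinity>" and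
    der: "\<forall>\<^sub>F s in nhds 0. ((\<lambda>t. real_of_ereal (?f (\<lambda>a b. \<Theta>s a b + t * H a b) (\<lambda>a. vs a + t * w a))) has_real_derivative \<phi>1 s) (at s)"
    by blast
  from eventually_nhds_x_imp_x[OF der] have "((\<lambda>t. real_of_ereal (?f (Tk \<Theta>s k t) (Vk vs k t))) has_real_derivative \<phi>1 0) (at 0)"
    unfolding eq .
  moreover from fin have "\<forall>\<^sub>F t in nhds 0. \<bar>?f (Tk \<Theta>s k t) (Vk vs k t)\<bar> \<noteq> \<infinity>" unfolding eq .
  ultimately show ?thesis by blast
qed

lemma grad_bound:
  assumes k: "k \<in> ({..<d} \<times> {..<d}) <+> {..<d}"
  and D: "((\<lambda>t. real_of_ereal (f (Tk \<Theta>s k t) (Vk vs k t))) has_real_derivative D) (at 0)"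
  shows "\<bar>D\<bar> \<le> grad_inf d f \<Theta>s vs"
proof -
  have "D = deriv (\<lambda>t. real_of_ereal (f (Tk \<Theta>s k t) (Vk vs k t))) 0"
    using DERIV_imp_deriv[OF D] by simp
  moreover have "\<bar>deriv (\<lambda>t. real_of_ereal (f (Tk \<Theta>s k t) (Vk vs k t))) 0\<bar> \<le> grad_inf d f \<Theta>s vs"
    unfolding grad_inf_def
  proof (rule Max_ge)
    show "finite (insert 0
     ((\<lambda>(i,j). \<bar>deriv (\<lambda>t. real_of_ereal (f (\<lambda>a b. \<Theta>s a b + (if a = i \<and> b = j then t else 0)) vs)) 0\<bar>)
        ` ({..<d} \<times> {..<d})
      \<union> (\<lambda>i. \<bar>deriv (\<lambda>t. real_of_ereal (f \<Theta>s (\<lambda>a. vs a + (if a = i then t else 0)))) 0\<bar>) ` {..<d}))"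
      by simp
    show "\<bar>deriv (\<lambda>t. real_of_ereal (f (Tk \<Theta>s k t) (Vk vs k t))) 0\<bar> \<in> insert 0
     ((\<lambda>(i,j). \<bar>deriv (\<lambda>t. real_of_ereal (f (\<lambda>a b. \<Theta>s a b + (if a = i \<and> b = j then t else 0)) vs)) 0\<bar>)
        ` ({..<d} \<times> {..<d})
      \<union> (\<lambda>i. \<bar>deriv (\<lambda>t. real_of_ereal (f \<Theta>s (\<lambda>a. vs a + (if a = i then t else 0)))) 0\<bar>) ` {..<d})"
      using k by (cases k) (auto simp: Tk_def Vk_def)
  qed
  ultimately show ?thesis by simp
qed




lemma qf_Tk:
  assumes "k \<in> ({..<d} \<times> {..<d}) <+> {..<d}"
  shows "qf d (Tk \<Theta>s k t) z = qf d \<Theta>s z + (case k of Inl (i,j) \<Rightarrow> z i * t * z j | Inr i \<Rightarrow> 0)"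
  using assms by (auto simp: Tk_def qf_add qf_single)

lemma ip_Vk:
  assumes "k \<in> ({..<d} \<times> {..<d}) <+> {..<d}"
  shows "ip d z (Vk vs k t) = ip d z vs + (case k of Inl _ \<Rightarrow> 0 | Inr i \<Rightarrow> z i * t)"
  using assms by (auto simp: Vk_def ip_add ip_single)

lemma sum_I:
  fixes d :: nat shows "(\<Sum>k\<in>({..<d} \<times> {..<d}) <+> {..<d}. g k) = (\<Sum>i<d. \<Sum>j<d. g (Inl (i,j))) + (\<Sum>i<d. g (Inr i))"
proof -
  have "sum (g \<circ> Inl) ({..<d} \<times> {..<d}) = (\<Sum>(i,j)\<in>{..<d} \<times> {..<d}. g (Inl (i,j)))"
    by (intro sum.cong) auto
  also have "\<dots> = (\<Sum>i<d. \<Sum>j<d. g (Inl (i,j)))" by (rule sum.cartesian_product[symmetric])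
  finally have c: "sum (g \<circ> Inl) ({..<d} \<times> {..<d}) = (\<Sum>i<d. \<Sum>j<d. g (Inl (i,j)))" .
  have "sum g (({..<d} \<times> {..<d}) <+> {..<d}) = sum (g \<circ> Inl) ({..<d} \<times> {..<d}) + sum (g \<circ> Inr) {..<d}"
    by (rule sum.Plus) auto
  thus ?thesis unfolding c by simp
qed

lemma card_I: fixes d :: nat shows "card (({..<d} \<times> {..<d}) <+> {..<d}) = d * d + d"
  by (simp add: card_Plus card_cartesian_product)

lemma Q_id:
  fixes H :: "nat \<Rightarrow> nat \<Rightarrow> real"
  assumes N: "N = real (card (({..<d} \<times> {..<d}) <+> {..<d}))" "N > 0"
  and m: "m = (\<lambda>k. case k of Inl (i,j) \<Rightarrow> H i j | Inr i \<Rightarrow> w i)"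
  shows "qf d (\<lambda>a b. \<Theta>s a b + (-s) * H a b) z = (\<Sum>k\<in>({..<d} \<times> {..<d}) <+> {..<d}. (1/N) * qf d (Tk \<Theta>s k (-s*N*m k)) z)"
proof -
  let ?I = "({..<d} \<times> {..<d}) <+> {..<d}"
  have "(\<Sum>k\<in>?I. (1/N) * qf d (Tk \<Theta>s k (-s*N*m k)) z)
      = (\<Sum>k\<in>?I. (1/N) * qf d \<Theta>s z + (1/N) * (case k of Inl (i,j) \<Rightarrow> z i * (-s*N*m k) * z j | Inr i \<Rightarrow> 0))"
    by (intro sum.cong refl) (auto simp: qf_Tk distrib_left split: sum.split)
  also have "\<dots> = N * ((1/N) * qf d \<Theta>s z) + (\<Sum>k\<in>?I. (1/N) * (case k of Inl (i,j) \<Rightarrow> z i * (-s*N*m k) * z j | Inr i \<Rightarrow> 0))"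
    unfolding sum.distrib using N by simp
  also have "\<dots> = N * ((1/N) * qf d \<Theta>s z) + (\<Sum>i<d. \<Sum>j<d. (1/N) * (z i * (-s*N*H i j) * z j))"
    by (subst sum_I) (simp add: m)
  also have "\<dots> = qf d \<Theta>s z + (-s) * (\<Sum>i<d. \<Sum>j<d. z i * H i j * z j)"
  proof -
    have "(1/N) * (z i * (-s*N*H i j) * z j) = (-s) * (z i * H i j * z j)" for i j using N(2) by simp
    thus ?thesis using N(2) by (simp add: sum_distrib_left algebra_simps)
  qed
  finally have e: "(\<Sum>k\<in>?I. (1/N) * qf d (Tk \<Theta>s k (-s*N*m k)) z) = qf d \<Theta>s z + (-s) * (\<Sum>i<d. \<Sum>j<d. z i * H i j * z j)" .
  have "qf d (\<lambda>a b. \<Theta>s a b + (-s) * H a b) z = qf d \<Theta>s z + (-s) * (\<Sum>i<d. \<Sum>j<d. z i * H i j * z j)"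
    unfolding qf_add qf_smult qf_def[of d H] ..
  thus ?thesis using e by simp
qed

lemma P_id:
  fixes w :: "nat \<Rightarrow> real"
  assumes N: "N = real (card (({..<d} \<times> {..<d}) <+> {..<d}))" "N > 0"
  and m: "m = (\<lambda>k. case k of Inl (i,j) \<Rightarrow> H i j | Inr i \<Rightarrow> w i)"
  shows "ip d z (\<lambda>a. vs a + (-s) * w a) = (\<Sum>k\<in>({..<d} \<times> {..<d}) <+> {..<d}. (1/N) * ip d z (Vk vs k (-s*N*m k)))"
proof -
  let ?I = "({..<d} \<times> {..<d}) <+> {..<d}"
  have "(\<Sum>k\<in>?I. (1/N) * ip d z (Vk vs k (-s*N*m k)))
      = (\<Sum>k\<in>?I. (1/N) * ip d z vs + (1/N) * (case k of Inl _ \<Rightarrow> 0 | Inr i \<Rightarrow> z i * (-s*N*m k)))"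
    by (intro sum.cong refl) (auto simp: ip_Vk distrib_left split: sum.split)
  also have "\<dots> = N * ((1/N) * ip d z vs) + (\<Sum>k\<in>?I. (1/N) * (case k of Inl _ \<Rightarrow> 0 | Inr i \<Rightarrow> z i * (-s*N*m k)))"
    unfolding sum.distrib using N by simp
  also have "\<dots> = N * ((1/N) * ip d z vs) + (\<Sum>i<d. (1/N) * (z i * (-s*N*w i)))"
    by (subst sum_I) (simp add: m)
  also have "\<dots> = ip d z vs + (-s) * (\<Sum>i<d. z i * w i)"
  proof -
    have "(1/N) * (z i * (-s*N*w i)) = (-s) * (z i * w i)" for i using N(2) by simp
    thus ?thesis using N(2) by (simp add: sum_distrib_left algebra_simps)
  qed
  finally have e: "(\<Sum>k\<in>?I. (1/N) * ip d z (Vk vs k (-s*N*m k))) = ip d z vs + (-s) * (\<Sum>i<d. z i * w i)" .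
  have "ip d z (\<lambda>a. vs a + (-s) * w a) = ip d z vs + (-s) * (\<Sum>i<d. z i * w i)"
    unfolding ip_add ip_smult ip_def[of d z w] ..
  thus ?thesis using e by simp
qed




lemma ev_comp_lin:
  assumes "eventually P (nhds (0::real))"
  shows "eventually (\<lambda>s. P (c * s)) (nhds 0)"
proof -
  have "((\<lambda>s. c * s) \<longlongrightarrow> ((\<lambda>s. c * s) 0)) (at 0)" by (intro tendsto_intros)
  hence "((\<lambda>s. c * s) \<longlongrightarrow> ((\<lambda>s. c * s) 0)) (nhds 0)" by (rule tendsto_at_iff_tendsto_nhds[THEN iffD1])
  hence "filterlim (\<lambda>s. c * s) (nhds 0) (nhds 0)" by simp
  thus ?thesis using assms by (simp add: filterlim_iff)
qed

lemma grad_lb: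
  assumes S: "S \<in> sets (lebd d)" and d: "0 < d"
  and hess: "hess_ge d \<kappa> (lnll d S n xs) \<Theta>s vs" and symH: "sym_mat d H"
  and g0: "((\<lambda>s. real_of_ereal (lnll d S n xs (\<lambda>a b. \<Theta>s a b + s * H a b) (\<lambda>a. vs a + s * w a))) has_real_derivative g1) (at 0)"
  shows "g1 \<ge> - grad_inf d (lnll d S n xs) \<Theta>s vs * ((\<Sum>i<d. \<Sum>j<d. \<bar>H i j\<bar>) + (\<Sum>i<d. \<bar>w i\<bar>))"
proof -
  let ?f = "lnll d S n xs"
  let ?I = "({..<d} \<times> {..<d}) <+> {..<d}"
  define G where "G = grad_inf d ?f \<Theta>s vs"
  define N where "N = real (card ?I)"
  have N0: "N > 0" unfolding N_def card_I using d by (simp only: of_nat_0_less_iff)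
  have finI: "finite ?I" by simp
  define m where "m = (\<lambda>k. case k of Inl (i,j) \<Rightarrow> H i j | Inr i \<Rightarrow> w i)"
  define C where "C k t = real_of_ereal (?f (Tk \<Theta>s k t) (Vk vs k t))" for k t
  define g where "g s = real_of_ereal (?f (\<lambda>a b. \<Theta>s a b + s * H a b) (\<lambda>a. vs a + s * w a))" for s
  have "\<forall>k\<in>?I. \<exists>D. (C k has_real_derivative D) (at 0) \<and> (\<forall>\<^sub>F t in nhds 0. \<bar>?f (Tk \<Theta>s k t) (Vk vs k t)\<bar> \<noteq> \<infinity>)"
    using coord_deriv[OF hess] unfolding C_def by blast
  then obtain D where D: "\<And>k. k\<in>?I \<Longrightarrow> (C k has_real_derivative D k) (at 0)"
    and Fin: "\<And>k. k\<in>?I \<Longrightarrow> \<forall>\<^sub>F t in nhds 0. \<bar>?f (Tk \<Theta>s k t) (Vk vs k t)\<bar> \<noteq> \<infinity>"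
    by metis
  have DG: "\<bar>D k\<bar> \<le> G" if "k\<in>?I" for k
    using grad_bound[OF that D[OF that, unfolded C_def]] unfolding G_def .
  have E1: "\<forall>\<^sub>F s in nhds 0. \<forall>k\<in>?I. \<bar>?f (Tk \<Theta>s k (-s*N*m k)) (Vk vs k (-s*N*m k))\<bar> \<noteq> \<infinity>"
  proof (rule eventually_ball_finite[OF finI], intro ballI)
    fix k assume k: "k \<in> ?I"
    from ev_comp_lin[OF Fin[OF k], of "-N*m k"]
    show "\<forall>\<^sub>F s in nhds 0. \<bar>?f (Tk \<Theta>s k (-s*N*m k)) (Vk vs k (-s*N*m k))\<bar> \<noteq> \<infinity>"
      by (simp add: algebra_simps)
  qed
  have E2: "\<forall>\<^sub>F s in nhds 0. \<bar>?f (\<lambda>a b. \<Theta>s a b + (-s) * H a b) (\<lambda>a. vs a + (-s) * w a)\<bar> \<noteq> \<infinity>"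
    using ev_comp_lin[OF conjunct1[OF hess_use[OF hess symH, of w]], of "-1"] by simp
  have E: "\<forall>\<^sub>F s in nhds 0. g (-s) \<le> (\<Sum>k\<in>?I. (1/N) * C k (-s*N*m k))"
    using E1 E2
  proof eventually_elim
    case (elim s)
    have J: "?f (\<lambda>a b. \<Theta>s a b + (-s) * H a b) (\<lambda>a. vs a + (-s) * w a)
      \<le> ereal (\<Sum>k\<in>?I. (1/N) * real_of_ereal (?f (Tk \<Theta>s k (-s*N*m k)) (Vk vs k (-s*N*m k))))"
    proof (rule lnll_jensen[OF S finI])
      show "\<forall>k\<in>?I. 0 \<le> 1/N" using N0 by simp
      show "(\<Sum>k\<in>?I. 1/N) = 1" using N0 d unfolding N_def by (simp add: lessThan_empty_iff)
      show "\<forall>k\<in>?I. \<bar>?f (Tk \<Theta>s k (-s*N*m k)) (Vk vs k (-s*N*m k))\<bar> \<noteq> \<infinity>" using elim(1) .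
      show "\<forall>z. qf d (\<lambda>a b. \<Theta>s a b + (-s) * H a b) z = (\<Sum>k\<in>?I. (1/N) * qf d (Tk \<Theta>s k (-s*N*m k)) z)"
        using Q_id[OF N_def N0 m_def] by blast
      show "\<forall>z. ip d z (\<lambda>a. vs a + (-s) * w a) = (\<Sum>k\<in>?I. (1/N) * ip d z (Vk vs k (-s*N*m k)))"
        using P_id[OF N_def N0 m_def] by blast
    qed
    show ?case unfolding g_def C_def using J elim(2)
      by (cases "?f (\<lambda>a b. \<Theta>s a b + (-s) * H a b) (\<lambda>a. vs a + (-s) * w a)") auto
  qed
  define R where "R s = (\<Sum>k\<in>?I. (1/N) * C k (-s*N*m k)) - g (-s)" for s
  have T0: "Tk \<Theta>s k 0 = \<Theta>s" "Vk vs k 0 = vs" for k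
    by (cases k; auto simp: Tk_def Vk_def)+
  have R0: "R 0 = 0" unfolding R_def C_def g_def using N0 d unfolding N_def by (simp add: T0 lessThan_empty_iff)
  have dk: "((\<lambda>s. C k (-s*N*m k)) has_real_derivative D k * (-N*m k)) (at 0)" if k: "k \<in> ?I" for k
  proof -
    have a: "(C k has_real_derivative D k) (at ((\<lambda>s. -s*N*m k) 0))" using D[OF k] by simp
    have b: "((\<lambda>s. -s*N*m k) has_real_derivative (-N*m k)) (at 0)"
      by (auto intro!: derivative_eq_intros)
    from DERIV_chain2[where f="C k" and g="\<lambda>s. -s*N*m k" and x=0 and s=UNIV, OF a b]
    show ?thesis by simp
  qed
  have dg: "((\<lambda>s. g (-s)) has_real_derivative g1 * (-1)) (at 0)"
  proof -
    have a: "(g has_real_derivative g1) (at ((\<lambda>s. -s) 0))" using g0 unfolding g_def by simp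
    have b: "((\<lambda>s::real. -s) has_real_derivative (-1)) (at 0)"
      by (auto intro!: derivative_eq_intros)
    from DERIV_chain2[where f="g" and g="\<lambda>s. -s" and x=0 and s=UNIV, OF a b]
    show ?thesis by simp
  qed
  have dR: "(R has_real_derivative (\<Sum>k\<in>?I. (1/N) * (D k * (-N*m k))) - g1 * (-1)) (at 0)"
    unfolding R_def[abs_def]
    by (intro DERIV_diff DERIV_sum DERIV_cmult dk dg) auto
  obtain \<delta> where \<delta>: "\<delta> > 0" "\<forall>y. dist y 0 < \<delta> \<longrightarrow> g (-y) \<le> (\<Sum>k\<in>?I. (1/N) * C k (-y*N*m k))"
    using E unfolding eventually_nhds_metric by blast
  have "(\<Sum>k\<in>?I. (1/N) * (D k * (-N*m k))) - g1 * (-1) = 0"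
  proof (rule DERIV_local_min[OF dR \<delta>(1)], intro allI impI)
    fix y :: real assume "\<bar>0 - y\<bar> < \<delta>"
    hence "dist y 0 < \<delta>" by (simp add: dist_real_def)
    thus "R 0 \<le> R y" using \<delta>(2) unfolding R0 by (simp add: R_def)
  qed
  moreover have "(\<Sum>k\<in>?I. (1/N) * (D k * (-N*m k))) = - (\<Sum>k\<in>?I. D k * m k)"
    using N0 by (simp add: sum_negf[symmetric])
  ultimately have g1eq: "g1 = (\<Sum>k\<in>?I. D k * m k)" by simp
  have "(\<Sum>k\<in>?I. - G * \<bar>m k\<bar>) \<le> (\<Sum>k\<in>?I. D k * m k)"
  proof (rule sum_mono)
    fix k assume k: "k \<in> ?I"
    have "\<bar>D k * m k\<bar> \<le> G * \<bar>m k\<bar>" unfolding abs_mult using DG[OF k] by (intro mult_right_mono) auto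
    thus "- G * \<bar>m k\<bar> \<le> D k * m k" by linarith
  qed
  moreover have "(\<Sum>k\<in>?I. \<bar>m k\<bar>) = (\<Sum>i<d. \<Sum>j<d. \<bar>H i j\<bar>) + (\<Sum>i<d. \<bar>w i\<bar>)"
    unfolding sum_I m_def by simp
  moreover have "(\<Sum>k\<in>?I. - G * \<bar>m k\<bar>) = - G * (\<Sum>k\<in>?I. \<bar>m k\<bar>)"
    by (simp add: sum_distrib_left)
  ultimately show ?thesis using g1eq unfolding G_def by simp
qed




lemma cs_H:
  fixes A H :: "nat \<Rightarrow> nat \<Rightarrow> real"
  shows "(\<Sum>i<d. \<Sum>j<d. if A i j \<noteq> 0 then \<bar>H i j\<bar> else 0) \<le> sqrt (real (nz d A)) * frob d H"
proof -
  let ?P = "{..<d} \<times> {..<d}"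
  define e where "e = (\<lambda>p. if A (fst p) (snd p) \<noteq> 0 then 1 else (0::real))"
  define h where "h = (\<lambda>p. H (fst p) (snd p))"
  have "(\<Sum>i<d. \<Sum>j<d. if A i j \<noteq> 0 then \<bar>H i j\<bar> else 0) = (\<Sum>(i,j)\<in>?P. if A i j \<noteq> 0 then \<bar>H i j\<bar> else 0)"
    by (rule sum.cartesian_product)
  also have "\<dots> = (\<Sum>p\<in>?P. \<bar>e p\<bar> * \<bar>h p\<bar>)"
    by (intro sum.cong) (auto simp: e_def h_def)
  also have "\<dots> \<le> L2_set e ?P * L2_set h ?P" by (rule L2_set_mult_ineq)
  also have "L2_set e ?P = sqrt (real (nz d A))"
  proof -
    have "(\<Sum>p\<in>?P. (e p)\<^sup>2) = (\<Sum>p\<in>?P. if A (fst p) (snd p) \<noteq> 0 then 1 else 0)"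
      by (intro sum.cong) (auto simp: e_def)
    also have "\<dots> = real (card {p\<in>?P. A (fst p) (snd p) \<noteq> 0})"
      by (simp add: sum.inter_filter[symmetric])
    also have "{p\<in>?P. A (fst p) (snd p) \<noteq> 0} = {(i,j). i < d \<and> j < d \<and> A i j \<noteq> 0}" by auto
    finally show ?thesis unfolding L2_set_def nz_def by simp
  qed
  also have "L2_set h ?P = frob d H"
  proof -
    have "(\<Sum>p\<in>?P. (h p)\<^sup>2) = (\<Sum>(i,j)\<in>?P. (H i j)\<^sup>2)"
      by (intro sum.cong) (auto simp: h_def)
    also have "\<dots> = (\<Sum>i<d. \<Sum>j<d. (H i j)\<^sup>2)" by (rule sum.cartesian_product[symmetric])
    finally show ?thesis unfolding L2_set_def frob_def by simp
  qed
  finally show ?thesis .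
qed

lemma cs_w:
  fixes w :: "nat \<Rightarrow> real"
  shows "(\<Sum>i<d. \<bar>w i\<bar>) \<le> sqrt (real d) * norm2 d w"
proof -
  have "(\<Sum>i<d. \<bar>w i\<bar>) = (\<Sum>i<d. \<bar>(\<lambda>_. 1::real) i\<bar> * \<bar>w i\<bar>)" by simp
  also have "\<dots> \<le> L2_set (\<lambda>_. 1::real) {..<d} * L2_set w {..<d}" by (rule L2_set_mult_ineq)
  also have "\<dots> = sqrt (real d) * norm2 d w" unfolding L2_set_def norm2_def by simp
  finally show ?thesis .
qed




lemma lnll_minf_iff: "lnll d S n xs \<Theta> v = -\<infinity> \<longleftrightarrow> Zf d S \<Theta> v = 0"
  unfolding lnll_eq log_part_eq by auto

lemma lnll_inf_iff: "lnll d S n xs \<Theta> v = \<infinity> \<longleftrightarrow> Zf d S \<Theta> v = \<infinity>"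
  unfolding lnll_eq log_part_eq by auto

lemma frob_smult: "frob d (\<lambda>i j. s * H i j) = \<bar>s\<bar> * frob d H"
proof -
  have "(\<Sum>i<d. \<Sum>j<d. (s * H i j)\<^sup>2) = s\<^sup>2 * (\<Sum>i<d. \<Sum>j<d. (H i j)\<^sup>2)"
    by (simp add: power_mult_distrib sum_distrib_left)
  thus ?thesis unfolding frob_def by (simp add: real_sqrt_mult)
qed

lemma norm2_smult: "norm2 d (\<lambda>i. s * w i) = \<bar>s\<bar> * norm2 d w"
proof -
  have "(\<Sum>i<d. (s * w i)\<^sup>2) = s\<^sup>2 * (\<Sum>i<d. (w i)\<^sup>2)"
    by (simp add: power_mult_distrib sum_distrib_left)
  thus ?thesis unfolding norm2_def by (simp add: real_sqrt_mult)
qed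

lemma frob_nonneg: "frob d H \<ge> 0" unfolding frob_def by (simp add: sum_nonneg)
lemma norm2_nonneg: "norm2 d w \<ge> 0" unfolding norm2_def by (simp add: sum_nonneg)

lemma qf_diff: "qf d (\<lambda>a b. A a b - B a b) z = qf d A z - qf d B z"
  unfolding qf_def by (simp add: algebra_simps sum_subtractf)

lemma ip_diff: "ip d z (\<lambda>a. v a - w a) = ip d z v - ip d z w"
  unfolding ip_def by (simp add: algebra_simps sum_subtractf)

lemma grad_nonneg: "grad_inf d f \<Theta> v \<ge> 0"
  unfolding grad_inf_def by (rule Max_ge) auto




definition pen :: "nat \<Rightarrow> (nat \<Rightarrow> nat \<Rightarrow> real) \<Rightarrow> real" where
  "pen d \<Theta> = (\<Sum>i<d. \<Sum>j<d. if i \<noteq> j then \<bar>\<Theta> i j\<bar> else 0)"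

lemma Lnll_eq: "Lnll d S n xs lam \<Theta> v = lnll d S n xs \<Theta> v + ereal (lam * pen d \<Theta>)"
  unfolding Lnll_def pen_def ..

lemma pen_convex:
  assumes "0 \<le> \<tau>" "\<tau> \<le> 1"
  shows "pen d (\<lambda>a b. \<Theta>s a b + \<tau> * (\<Theta>t a b - \<Theta>s a b)) \<le> \<tau> * pen d \<Theta>t + (1 - \<tau>) * pen d \<Theta>s"
proof -
  have "\<bar>\<Theta>s a b + \<tau> * (\<Theta>t a b - \<Theta>s a b)\<bar> \<le> \<tau> * \<bar>\<Theta>t a b\<bar> + (1 - \<tau>) * \<bar>\<Theta>s a b\<bar>" for a b
  proof -
    have "\<Theta>s a b + \<tau> * (\<Theta>t a b - \<Theta>s a b) = \<tau> * \<Theta>t a b + (1 - \<tau>) * \<Theta>s a b" by (simp add: algebra_simps)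
    also have "\<bar>\<dots>\<bar> \<le> \<bar>\<tau> * \<Theta>t a b\<bar> + \<bar>(1 - \<tau>) * \<Theta>s a b\<bar>" by (rule abs_triangle_ineq)
    finally show ?thesis using assms by (simp add: abs_mult)
  qed
  hence "pen d (\<lambda>a b. \<Theta>s a b + \<tau> * (\<Theta>t a b - \<Theta>s a b)) \<le>
     (\<Sum>i<d. \<Sum>j<d. if i \<noteq> j then \<tau> * \<bar>\<Theta>t i j\<bar> + (1 - \<tau>) * \<bar>\<Theta>s i j\<bar> else 0)"
    unfolding pen_def by (intro sum_mono) auto
  also have "\<dots> = \<tau> * pen d \<Theta>t + (1 - \<tau>) * pen d \<Theta>s"
  proof -
    have e: "(if i \<noteq> j then \<tau> * \<bar>\<Theta>t i j\<bar> + (1 - \<tau>) * \<bar>\<Theta>s i j\<bar> else 0)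
       = \<tau> * (if i \<noteq> j then \<bar>\<Theta>t i j\<bar> else 0) + (1 - \<tau>) * (if i \<noteq> j then \<bar>\<Theta>s i j\<bar> else 0)" for i j :: nat
      by simp
    show ?thesis unfolding pen_def e by (simp only: sum.distrib sum_distrib_left)
  qed
  finally show ?thesis .
qed

lemma pen_lb:
  assumes "0 \<le> \<tau>"
  shows "pen d (\<lambda>a b. \<Theta>s a b + \<tau> * H a b) - pen d \<Theta>s \<ge>
    \<tau> * (\<Sum>i<d. \<Sum>j<d. if i \<noteq> j then (if \<Theta>s i j = 0 then \<bar>H i j\<bar> else - \<bar>H i j\<bar>) else 0)"
proof -
  have "\<tau> * (if i \<noteq> j then (if \<Theta>s i j = 0 then \<bar>H i j\<bar> else - \<bar>H i j\<bar>) else 0)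
     \<le> (if i \<noteq> j then \<bar>\<Theta>s i j + \<tau> * H i j\<bar> else 0) - (if i \<noteq> j then \<bar>\<Theta>s i j\<bar> else 0)" for i j
  proof (cases "i \<noteq> j")
    case True
    show ?thesis
    proof (cases "\<Theta>s i j = 0")
      case True thus ?thesis using \<open>i \<noteq> j\<close> assms by (simp add: abs_mult)
    next
      case False
      have "\<bar>\<Theta>s i j\<bar> \<le> \<bar>\<Theta>s i j + \<tau> * H i j\<bar> + \<bar>\<tau> * H i j\<bar>" by linarith
      thus ?thesis using False \<open>i \<noteq> j\<close> assms by (simp add: abs_mult)
    qed
  qed simp
  hence "(\<Sum>i<d. \<Sum>j<d. \<tau> * (if i \<noteq> j then (if \<Theta>s i j = 0 then \<bar>H i j\<bar> else - \<bar>H i j\<bar>) else 0))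
     \<le> (\<Sum>i<d. \<Sum>j<d. (if i \<noteq> j then \<bar>\<Theta>s i j + \<tau> * H i j\<bar> else 0) - (if i \<noteq> j then \<bar>\<Theta>s i j\<bar> else 0))"
    by (intro sum_mono) auto
  thus ?thesis unfolding pen_def by (simp add: sum_distrib_left sum_subtractf)
qed




lemma main_pos:
  fixes \<Theta>s \<Theta>t :: "nat \<Rightarrow> nat \<Rightarrow> real" and vs vt :: "nat \<Rightarrow> real"
  assumes S: "S \<in> sets (lebd d)" and d: "0 < d"
  and symS: "sym_mat d \<Theta>s" and diag: "\<forall>i<d. \<Theta>s i i \<noteq> 0"
  and \<kappa>: "0 < \<kappa>"
  and hessall: "\<forall>\<Theta> v. sym_mat d \<Theta> \<and>
        (frob d (\<lambda>i j. \<Theta> i j - \<Theta>s i j))\<^sup>2 + (norm2 d (\<lambda>i. v i - vs i))\<^sup>2 \<le> r'\<^sup>2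
        \<longrightarrow> hess_ge d \<kappa> (lnll d S n xs) \<Theta> v"
  and \<epsilon>: "0 < \<epsilon>" "\<epsilon> \<le> r'"
  and lamG: "2 * grad_inf d (lnll d S n xs) \<Theta>s vs \<le> lam"
  and lamc: "lam \<le> (1/24) * \<kappa> * \<epsilon> / sqrt (real (nz d \<Theta>s))"
  and symT: "sym_mat d \<Theta>t"
  and minim: "\<forall>\<Theta> v. sym_mat d \<Theta> \<longrightarrow> Lnll d S n xs lam \<Theta>t vt \<le> Lnll d S n xs lam \<Theta> v"
  shows "frob d (\<lambda>i j. \<Theta>t i j - \<Theta>s i j) + norm2 d (\<lambda>i. vt i - vs i) \<le> \<epsilon>"
proof (rule ccontr)
  let ?f = "lnll d S n xs"
  define H where "H = (\<lambda>i j. \<Theta>t i j - \<Theta>s i j)"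
  define w where "w = (\<lambda>i. vt i - vs i)"
  define G where "G = grad_inf d ?f \<Theta>s vs"
  define R2 where "R2 = (frob d H)\<^sup>2 + (norm2 d w)\<^sup>2"
  define \<rho> where "\<rho> = sqrt R2"
  assume "\<not> frob d (\<lambda>i j. \<Theta>t i j - \<Theta>s i j) + norm2 d (\<lambda>i. vt i - vs i) \<le> \<epsilon>"
  hence big: "frob d H + norm2 d w > \<epsilon>" unfolding H_def w_def by simp
  have G0: "G \<ge> 0" unfolding G_def by (rule grad_nonneg)
  have lam0: "lam \<ge> 0" using G0 lamG unfolding G_def by simp
  have Glam: "G \<le> lam / 2" using lamG unfolding G_def by simp
  have symH: "sym_mat d H" using symS symT unfolding sym_mat_def H_def by simp
  have fH: "frob d H \<le> \<rho>" unfolding \<rho>_def R2_def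
    by (rule real_le_rsqrt) (simp add: norm2_nonneg)
  have nw: "norm2 d w \<le> \<rho>" unfolding \<rho>_def R2_def
    by (rule real_le_rsqrt) (simp add: frob_nonneg)
  have \<rho>big: "2 * \<rho> > \<epsilon>" using big fH nw by linarith
  hence \<rho>0: "\<rho> > 0" using \<epsilon> by simp
  have R2\<rho>: "R2 = \<rho>\<^sup>2" unfolding \<rho>_def R2_def by simp
  define \<tau> where "\<tau> = \<epsilon> / (2 * \<rho>)"
  have \<tau>0: "0 < \<tau>" unfolding \<tau>_def using \<epsilon> \<rho>0 by simp
  have \<tau>1: "\<tau> < 1" unfolding \<tau>_def using \<rho>big \<rho>0 by simp
  have \<tau>\<rho>: "\<tau> * \<rho> = \<epsilon> / 2" unfolding \<tau>_def using \<rho>0 by simp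
  have hess_s: "hess_ge d \<kappa> ?f (\<lambda>a b. \<Theta>s a b + s * H a b) (\<lambda>a. vs a + s * w a)" if s: "0 \<le> s" "s \<le> \<tau>" for s
  proof -
    have sym: "sym_mat d (\<lambda>a b. \<Theta>s a b + s * H a b)" using symS symH unfolding sym_mat_def by simp
    have e1: "(\<lambda>i j. \<Theta>s i j + s * H i j - \<Theta>s i j) = (\<lambda>i j. s * H i j)" by simp
    have e2: "(\<lambda>i. vs i + s * w i - vs i) = (\<lambda>i. s * w i)" by simp
    have "(frob d (\<lambda>i j. s * H i j))\<^sup>2 + (norm2 d (\<lambda>i. s * w i))\<^sup>2 = s\<^sup>2 * R2"
      unfolding frob_smult norm2_smult R2_def by (simp add: power_mult_distrib algebra_simps)
    also have "\<dots> \<le> \<tau>\<^sup>2 * R2" using s unfolding R2\<rho> by (intro mult_right_mono power_mono) auto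
    also have "\<dots> = (\<tau> * \<rho>)\<^sup>2" unfolding R2\<rho> by (simp add: power_mult_distrib)
    also have "\<dots> \<le> r'\<^sup>2" unfolding \<tau>\<rho> using \<epsilon> by (intro power_mono) auto
    finally have "(frob d (\<lambda>i j. s * H i j))\<^sup>2 + (norm2 d (\<lambda>i. s * w i))\<^sup>2 \<le> r'\<^sup>2" .
    thus ?thesis using hessall sym unfolding e1 e2 by auto
  qed
  have hess0: "hess_ge d \<kappa> ?f \<Theta>s vs" using hess_s[of 0] \<tau>0 by simp
  have zsym: "sym_mat d (\<lambda>a b. 0)" unfolding sym_mat_def by simp
  have fin_s: "\<bar>?f (\<lambda>a b. \<Theta>s a b + s * H a b) (\<lambda>a. vs a + s * w a)\<bar> \<noteq> \<infinity>" if s: "0 \<le> s" "s \<le> \<tau>" for s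
    using eventually_nhds_x_imp_x[OF conjunct1[OF hess_use[OF hess_s[OF s] zsym, of "\<lambda>a. 0"]]] by simp
  have fin0: "\<bar>?f \<Theta>s vs\<bar> \<noteq> \<infinity>" using fin_s[of 0] \<tau>0 by simp
  define g where "g s = real_of_ereal (?f (\<lambda>a b. \<Theta>s a b + s * H a b) (\<lambda>a. vs a + s * w a))" for s
  obtain g1 where g1: "((\<lambda>s. real_of_ereal (?f (\<lambda>a b. \<Theta>s a b + s * H a b) (\<lambda>a. vs a + s * w a))) has_real_derivative g1) (at 0)"
  proof -
    from conjunct2[OF hess_use[OF hess0 symH, of w]] obtain \<phi>1 where
      "\<forall>\<^sub>F s in nhds 0. ((\<lambda>t. real_of_ereal (?f (\<lambda>a b. \<Theta>s a b + t * H a b) (\<lambda>a. vs a + t * w a))) has_real_derivative \<phi>1 s) (at s)"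
      by blast
    from eventually_nhds_x_imp_x[OF this] show ?thesis by (rule that)
  qed
  have taylor: "g \<tau> \<ge> g 0 + \<tau> * g1 + (\<kappa> * R2) * \<tau>^2 / 2"
  proof (rule taylor_lb)
    show "0 \<le> \<tau>" using \<tau>0 by simp
    show "(g has_real_derivative g1) (at 0)" using g1 unfolding g_def[abs_def] .
    fix s0 assume s0: "0 \<le> s0" "s0 \<le> \<tau>"
    from conjunct2[OF hess_use[OF hess_s[OF s0] symH, of w]] obtain \<phi>1 \<phi>2 where
      a: "\<forall>\<^sub>F s in nhds 0. ((\<lambda>t. real_of_ereal (?f (\<lambda>a b. \<Theta>s a b + s0 * H a b + t * H a b) (\<lambda>a. vs a + s0 * w a + t * w a))) has_real_derivative \<phi>1 s) (at s)"
      and b: "(\<phi>1 has_real_derivative \<phi>2) (at 0)" and c: "\<phi>2 \<ge> \<kappa> * ((frob d H)\<^sup>2 + (norm2 d w)\<^sup>2)"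
      by blast
    have e: "(\<lambda>t. g (s0 + t)) = (\<lambda>t. real_of_ereal (?f (\<lambda>a b. \<Theta>s a b + s0 * H a b + t * H a b) (\<lambda>a. vs a + s0 * w a + t * w a)))"
      unfolding g_def by (simp add: algebra_simps)
    show "\<exists>\<phi>1 \<phi>2. (\<forall>\<^sub>F s in nhds 0. ((\<lambda>t. g (s0 + t)) has_real_derivative \<phi>1 s) (at s)) \<and>
       (\<phi>1 has_real_derivative \<phi>2) (at 0) \<and> \<phi>2 \<ge> \<kappa> * R2"
      unfolding e R2_def using a b c by blast
  qed
  have glb: "g1 \<ge> - G * ((\<Sum>i<d. \<Sum>j<d. \<bar>H i j\<bar>) + (\<Sum>i<d. \<bar>w i\<bar>))"
    unfolding G_def by (rule grad_lb[OF S d hess0 symH g1])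
  have Lpt: "Lnll d S n xs lam \<Theta>t vt \<le> Lnll d S n xs lam \<Theta>s vs" using minim symS by blast
  have fin_t: "\<bar>?f \<Theta>t vt\<bar> \<noteq> \<infinity>"
  proof -
    have "?f \<Theta>t vt \<noteq> \<infinity>"
    proof
      assume "?f \<Theta>t vt = \<infinity>"
      hence "Lnll d S n xs lam \<Theta>t vt = \<infinity>" unfolding Lnll_eq by simp
      with Lpt fin0 show False unfolding Lnll_eq by (cases "?f \<Theta>s vs") auto
    qed
    moreover have "?f \<Theta>t vt \<noteq> -\<infinity>"
    proof
      assume "?f \<Theta>t vt = -\<infinity>"
      hence "Zf d S \<Theta>t vt = 0" by (simp add: lnll_minf_iff)
      hence "Zf d S \<Theta>s vs = 0" using Zf_zero_iff[OF S] by blast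
      hence "?f \<Theta>s vs = -\<infinity>" by (simp add: lnll_minf_iff)
      with fin0 show False by simp
    qed
    ultimately show ?thesis by auto
  qed
  have conv: "?f (\<lambda>a b. \<Theta>s a b + \<tau> * H a b) (\<lambda>a. vs a + \<tau> * w a)
     \<le> ereal (\<Sum>b\<in>UNIV. (if b then \<tau> else 1 - \<tau>) * real_of_ereal (?f (if b then \<Theta>t else \<Theta>s) (if b then vt else vs)))"
  proof (rule lnll_jensen[OF S])
    show "finite (UNIV :: bool set)" by simp
    show "\<forall>k\<in>UNIV. 0 \<le> (if k then \<tau> else 1 - \<tau>)" using \<tau>0 \<tau>1 by simp
    show "(\<Sum>k\<in>UNIV. if k then \<tau> else 1 - \<tau>) = 1" by (simp add: UNIV_bool)
    show "\<forall>k\<in>UNIV. \<bar>?f (if k then \<Theta>t else \<Theta>s) (if k then vt else vs)\<bar> \<noteq> \<infinity>" using fin0 fin_t by simp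
    show "\<forall>z. qf d (\<lambda>a b. \<Theta>s a b + \<tau> * H a b) z = (\<Sum>k\<in>UNIV. (if k then \<tau> else 1 - \<tau>) * qf d (if k then \<Theta>t else \<Theta>s) z)"
      unfolding H_def by (simp add: UNIV_bool qf_add qf_smult qf_diff algebra_simps)
    show "\<forall>z. ip d z (\<lambda>a. vs a + \<tau> * w a) = (\<Sum>k\<in>UNIV. (if k then \<tau> else 1 - \<tau>) * ip d z (if k then vt else vs))"
      unfolding w_def by (simp add: UNIV_bool ip_add ip_smult ip_diff algebra_simps)
  qed
  hence conv': "g \<tau> \<le> \<tau> * real_of_ereal (?f \<Theta>t vt) + (1 - \<tau>) * real_of_ereal (?f \<Theta>s vs)"
    using fin_s[of \<tau>] \<tau>0 unfolding g_def
    by (cases "?f (\<lambda>a b. \<Theta>s a b + \<tau> * H a b) (\<lambda>a. vs a + \<tau> * w a)") (auto simp: UNIV_bool)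
  have penc: "pen d (\<lambda>a b. \<Theta>s a b + \<tau> * H a b) \<le> \<tau> * pen d \<Theta>t + (1 - \<tau>) * pen d \<Theta>s"
    unfolding H_def using pen_convex[where \<tau>=\<tau> and d=d and \<Theta>s=\<Theta>s and \<Theta>t=\<Theta>t] \<tau>0 \<tau>1 by simp
  have Lpt': "real_of_ereal (?f \<Theta>t vt) + lam * pen d \<Theta>t \<le> real_of_ereal (?f \<Theta>s vs) + lam * pen d \<Theta>s"
    using Lpt fin0 fin_t unfolding Lnll_eq
    by (cases "?f \<Theta>t vt"; cases "?f \<Theta>s vs") auto
  have g0: "g 0 = real_of_ereal (?f \<Theta>s vs)" unfolding g_def by simp
  have key1: "g \<tau> - g 0 \<le> lam * (pen d \<Theta>s - pen d (\<lambda>a b. \<Theta>s a b + \<tau> * H a b))"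
  proof -
    have "g \<tau> + lam * pen d (\<lambda>a b. \<Theta>s a b + \<tau> * H a b)
       \<le> \<tau> * (real_of_ereal (?f \<Theta>t vt) + lam * pen d \<Theta>t) + (1 - \<tau>) * (real_of_ereal (?f \<Theta>s vs) + lam * pen d \<Theta>s)"
      using conv' mult_left_mono[OF penc lam0] by (simp add: algebra_simps)
    also have "\<dots> \<le> \<tau> * (real_of_ereal (?f \<Theta>s vs) + lam * pen d \<Theta>s) + (1 - \<tau>) * (real_of_ereal (?f \<Theta>s vs) + lam * pen d \<Theta>s)"
      using Lpt' \<tau>0 by (intro add_right_mono mult_left_mono) auto
    finally show ?thesis unfolding g0 by (simp add: algebra_simps)
  qed
  define off where "off i j = (if i \<noteq> j then (if \<Theta>s i j = 0 then \<bar>H i j\<bar> else - \<bar>H i j\<bar>) else 0)" for i j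
  have key2: "pen d (\<lambda>a b. \<Theta>s a b + \<tau> * H a b) - pen d \<Theta>s \<ge> \<tau> * (\<Sum>i<d. \<Sum>j<d. off i j)"
    unfolding off_def using pen_lb[where \<tau>=\<tau> and d=d and \<Theta>s=\<Theta>s and H=H] \<tau>0 by simp
  have entry: "- G * \<bar>H i j\<bar> + lam * off i j \<ge> - (3/2) * lam * (if \<Theta>s i j \<noteq> 0 then \<bar>H i j\<bar> else 0)"
    if "i < d" for i j
  proof -
    define x where "x = \<bar>H i j\<bar>"
    define A where "A = G * x"
    define B where "B = lam * x"
    have a: "A \<le> B / 2" unfolding A_def B_def x_def using mult_right_mono[OF Glam abs_ge_zero[of "H i j"]] by simp
    have p: "0 \<le> B" unfolding B_def x_def using lam0 by simp
    have q: "0 \<le> A" unfolding A_def x_def using G0 by simp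
    have l: "- G * \<bar>H i j\<bar> + lam * off i j = - A + lam * off i j" unfolding A_def x_def by simp
    have r: "- (3/2) * lam * (if \<Theta>s i j \<noteq> 0 then \<bar>H i j\<bar> else 0) = - (3/2) * (if \<Theta>s i j \<noteq> 0 then B else 0)"
      unfolding B_def x_def by simp
    show ?thesis unfolding l r
    proof (cases "i = j")
      case True
      have "\<Theta>s i j \<noteq> 0" using diag that True by simp
      thus "- (3/2) * (if \<Theta>s i j \<noteq> 0 then B else 0) \<le> - A + lam * off i j"
        using True a p unfolding off_def by simp
    next
      case False
      show "- (3/2) * (if \<Theta>s i j \<noteq> 0 then B else 0) \<le> - A + lam * off i j"
      proof (cases "\<Theta>s i j = 0")
        case True
        have "lam * off i j = B" unfolding off_def B_def x_def using True False by simp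
        thus ?thesis using True a q by simp
      next
        case F2: False
        have "lam * off i j = - B" unfolding off_def B_def x_def using F2 False by simp
        thus ?thesis using F2 a q by simp
      qed
    qed
  qed
  have nzd: "d \<le> nz d \<Theta>s"
  proof -
    have "(\<lambda>i. (i,i)) ` {..<d} \<subseteq> {(i,j). i < d \<and> j < d \<and> \<Theta>s i j \<noteq> 0}" using diag by auto
    moreover have "finite {(i,j). i < d \<and> j < d \<and> \<Theta>s i j \<noteq> 0}"
      by (rule finite_subset[of _ "{..<d} \<times> {..<d}"]) auto
    ultimately have "card ((\<lambda>i. (i,i)) ` {..<d}) \<le> nz d \<Theta>s" unfolding nz_def by (rule card_mono[rotated])
    moreover have "card ((\<lambda>i. (i,i)) ` {..<d}) = d" by (subst card_image) (auto simp: inj_on_def)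
    ultimately show ?thesis by simp
  qed
  define sq where "sq = sqrt (real (nz d \<Theta>s))"
  have sq0: "sq \<ge> 0" unfolding sq_def by simp
  have sqd: "sqrt (real d) \<le> sq" unfolding sq_def using nzd by simp
  have lamsq: "lam * sq \<le> (1/24) * \<kappa> * \<epsilon>"
  proof (cases "nz d \<Theta>s = 0")
    case True
    hence "lam \<le> 0" using lamc by simp
    hence "lam = 0" using lam0 by simp
    thus ?thesis using \<kappa> \<epsilon> by simp
  next
    case False
    hence "sq > 0" unfolding sq_def by simp
    thus ?thesis using lamc unfolding sq_def by (simp add: field_simps)
  qed
  have sumH: "- G * (\<Sum>i<d. \<Sum>j<d. \<bar>H i j\<bar>) + lam * (\<Sum>i<d. \<Sum>j<d. off i j) \<ge> - (3/2) * lam * (sq * frob d H)"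
  proof -
    have "- (3/2) * lam * (\<Sum>i<d. \<Sum>j<d. if \<Theta>s i j \<noteq> 0 then \<bar>H i j\<bar> else 0)
       \<le> (\<Sum>i<d. \<Sum>j<d. - G * \<bar>H i j\<bar> + lam * off i j)"
      unfolding sum_distrib_left using entry by (intro sum_mono) auto
    also have "\<dots> = - G * (\<Sum>i<d. \<Sum>j<d. \<bar>H i j\<bar>) + lam * (\<Sum>i<d. \<Sum>j<d. off i j)"
      by (simp add: sum.distrib sum_distrib_left sum_subtractf sum_negf)
    finally have "- (3/2) * lam * (\<Sum>i<d. \<Sum>j<d. if \<Theta>s i j \<noteq> 0 then \<bar>H i j\<bar> else 0)
       \<le> - G * (\<Sum>i<d. \<Sum>j<d. \<bar>H i j\<bar>) + lam * (\<Sum>i<d. \<Sum>j<d. off i j)" .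
    moreover have "(3/2) * lam * (\<Sum>i<d. \<Sum>j<d. if \<Theta>s i j \<noteq> 0 then \<bar>H i j\<bar> else 0) \<le> (3/2) * lam * (sq * frob d H)"
      unfolding sq_def using lam0 cs_H[where d=d and A=\<Theta>s and H=H] by (intro mult_left_mono) auto
    ultimately show ?thesis by linarith
  qed
  have sumw: "- G * (\<Sum>i<d. \<bar>w i\<bar>) \<ge> - (3/2) * lam * (sq * norm2 d w)"
  proof -
    have "G * (\<Sum>i<d. \<bar>w i\<bar>) \<le> (lam/2) * (sqrt (real d) * norm2 d w)"
      using cs_w[where d=d and w=w] Glam G0 by (intro mult_mono) (auto simp: sum_nonneg)
    also have "\<dots> \<le> (3/2) * lam * (sq * norm2 d w)"
      using sqd lam0 norm2_nonneg[of d w] sq0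
      by (intro mult_mono mult_right_mono) (auto simp: mult_nonneg_nonneg)
    finally show ?thesis by simp
  qed
  have "0 \<ge> \<tau> * g1 + (\<kappa> * R2) * \<tau>^2 / 2 + lam * (\<tau> * (\<Sum>i<d. \<Sum>j<d. off i j))"
    using taylor key1 key2 mult_left_mono[OF key2 lam0] by (simp add: algebra_simps)
  moreover have "\<tau> * g1 + lam * (\<tau> * (\<Sum>i<d. \<Sum>j<d. off i j)) \<ge> \<tau> * (- (3/2) * lam * (sq * (frob d H + norm2 d w)))"
  proof -
    have "g1 + lam * (\<Sum>i<d. \<Sum>j<d. off i j) \<ge> - (3/2) * lam * (sq * (frob d H + norm2 d w))"
      using glb sumH sumw by (simp add: algebra_simps)
    from mult_left_mono[OF this, of \<tau>] \<tau>0 show ?thesis by (simp add: algebra_simps)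
  qed
  moreover have "\<tau> * ((3/2) * lam * (sq * (frob d H + norm2 d w))) \<le> \<tau> * ((3/2) * lam * (sq * (2 * \<rho>)))"
    using fH nw \<tau>0 lam0 sq0 by (intro mult_left_mono) auto
  ultimately have "0 \<ge> - (\<tau> * ((3/2) * lam * (sq * (2 * \<rho>)))) + (\<kappa> * R2) * \<tau>^2 / 2"
    by (simp add: algebra_simps)
  also have "\<tau> * ((3/2) * lam * (sq * (2 * \<rho>))) = 3 * (lam * sq) * (\<tau> * \<rho>)" by (simp add: algebra_simps)
  also have "(\<kappa> * R2) * \<tau>^2 / 2 = \<kappa> * (\<tau> * \<rho>)\<^sup>2 / 2" unfolding R2\<rho> by (simp add: power_mult_distrib)
  finally have "0 \<ge> - (3 * (lam * sq) * (\<epsilon>/2)) + \<kappa> * (\<epsilon>/2)\<^sup>2 / 2" unfolding \<tau>\<rho> .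
  moreover have "3 * (lam * sq) * (\<epsilon>/2) \<le> 3 * ((1/24) * \<kappa> * \<epsilon>) * (\<epsilon>/2)"
    using lamsq \<epsilon> by (intro mult_right_mono mult_left_mono) auto
  ultimately have "0 \<ge> - (3 * ((1/24) * \<kappa> * \<epsilon>) * (\<epsilon>/2)) + \<kappa> * (\<epsilon>/2)\<^sup>2 / 2" by linarith
  moreover have "- (3 * ((1/24) * \<kappa> * \<epsilon>) * (\<epsilon>/2)) + \<kappa> * (\<epsilon>/2)\<^sup>2 / 2 = \<kappa> * \<epsilon>\<^sup>2 / 16"
    by (simp add: power2_eq_square field_simps)
  moreover have "\<kappa> * \<epsilon>\<^sup>2 / 16 > 0" using \<kappa> \<epsilon> by simp
  ultimately show False by linarith
qed




theorem lemma9: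
  shows "\<exists>c>0. \<forall>(d::nat) (S::(nat \<Rightarrow> real) set) (\<mu>s::nat \<Rightarrow> real) (\<Sigma>s::nat \<Rightarrow> nat \<Rightarrow> real)
      (\<Theta>s::nat \<Rightarrow> nat \<Rightarrow> real) (vs::nat \<Rightarrow> real) (n::nat) (xs::nat \<Rightarrow> nat \<Rightarrow> real)
      (\<kappa>::real) (r'::real) (\<epsilon>::real) (lam::real).
    S \<in> sets (lebd d) \<and>
    pos_def d \<Sigma>s \<and>
    (LINT x:S|lebd d. gauss_density d \<mu>s \<Sigma>s x) > 0 \<and>
    \<Theta>s = mat_inv d \<Sigma>s \<and>
    vs = matvec d \<Theta>s \<mu>s \<and>
    0 < n \<and>
    0 < \<kappa> \<and> 0 < r' \<and>
    (\<forall>\<Theta> v. sym_mat d \<Theta> \<and>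
        (frob d (\<lambda>i j. \<Theta> i j - \<Theta>s i j))\<^sup>2 + (norm2 d (\<lambda>i. v i - vs i))\<^sup>2 \<le> r'\<^sup>2
        \<longrightarrow> hess_ge d \<kappa> (lnll d S n xs) \<Theta> v) \<and>
    0 < \<epsilon> \<and> \<epsilon> \<le> r' \<and>
    2 * grad_inf d (lnll d S n xs) \<Theta>s vs \<le> lam \<and>
    lam \<le> c * \<kappa> * \<epsilon> / sqrt (real (nz d \<Theta>s))
    \<longrightarrow> (\<forall>\<Theta>t vt. sym_mat d \<Theta>t \<and>
          (\<forall>\<Theta> v. sym_mat d \<Theta> \<longrightarrow> Lnll d S n xs lam \<Theta>t vt \<le> Lnll d S n xs lam \<Theta> v)
          \<longrightarrow> frob d (\<lambda>i j. \<Theta>t i j - \<Theta>s i j) + norm2 d (\<lambda>i. vt i - vs i) \<le> \<epsilon>)"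
proof (intro exI[of _ "1/24::real"] conjI allI impI)
  show "(0::real) < 1/24" by simp
next
  fix d S \<mu>s \<Sigma>s \<Theta>s vs n xs \<kappa> r' \<epsilon> lam \<Theta>t vt
  assume A: "S \<in> sets (lebd d) \<and>
    pos_def d \<Sigma>s \<and>
    (LINT x:S|lebd d. gauss_density d \<mu>s \<Sigma>s x) > 0 \<and>
    \<Theta>s = mat_inv d \<Sigma>s \<and>
    vs = matvec d \<Theta>s \<mu>s \<and>
    0 < n \<and>
    0 < \<kappa> \<and> 0 < r' \<and>
    (\<forall>\<Theta> v. sym_mat d \<Theta> \<and>
        (frob d (\<lambda>i j. \<Theta> i j - \<Theta>s i j))\<^sup>2 + (norm2 d (\<lambda>i. v i - vs i))\<^sup>2 \<le> r'\<^sup>2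
        \<longrightarrow> hess_ge d \<kappa> (lnll d S n xs) \<Theta> v) \<and>
    0 < \<epsilon> \<and> \<epsilon> \<le> r' \<and>
    2 * grad_inf d (lnll d S n xs) \<Theta>s vs \<le> lam \<and>
    lam \<le> 1/24 * \<kappa> * \<epsilon> / sqrt (real (nz d \<Theta>s))"
  assume T: "sym_mat d \<Theta>t \<and>
          (\<forall>\<Theta> v. sym_mat d \<Theta> \<longrightarrow> Lnll d S n xs lam \<Theta>t vt \<le> Lnll d S n xs lam \<Theta> v)"
  show "frob d (\<lambda>i j. \<Theta>t i j - \<Theta>s i j) + norm2 d (\<lambda>i. vt i - vs i) \<le> \<epsilon>"
  proof (cases "d = 0")
    case True
    thus ?thesis using A unfolding frob_def norm2_def by simp
  next
    case False
    have pd: "pos_def d \<Sigma>s" and ts: "\<Theta>s = mat_inv d \<Sigma>s" using A by auto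
    have symS: "sym_mat d \<Theta>s" using inv_facts(1)[OF pd] ts by simp
    have diag: "\<forall>i<d. \<Theta>s i i \<noteq> 0" using inv_facts(2)[OF pd] ts by auto
    show ?thesis
    proof (rule main_pos[where r'=r'])
      show "S \<in> sets (lebd d)" using A by blast
      show "0 < d" using False by simp
      show "sym_mat d \<Theta>s" by (rule symS)
      show "\<forall>i<d. \<Theta>s i i \<noteq> 0" by (rule diag)
      show "0 < \<kappa>" using A by blast
      show "\<forall>\<Theta> v. sym_mat d \<Theta> \<and>
        (frob d (\<lambda>i j. \<Theta> i j - \<Theta>s i j))\<^sup>2 + (norm2 d (\<lambda>i. v i - vs i))\<^sup>2 \<le> r'\<^sup>2
        \<longrightarrow> hess_ge d \<kappa> (lnll d S n xs) \<Theta> v" using A by blast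
      show "0 < \<epsilon>" using A by blast
      show "\<epsilon> \<le> r'" using A by blast
      show "2 * grad_inf d (lnll d S n xs) \<Theta>s vs \<le> lam" using A by blast
      show "lam \<le> (1/24) * \<kappa> * \<epsilon> / sqrt (real (nz d \<Theta>s))" using A by blast
      show "sym_mat d \<Theta>t" using T by blast
      show "\<forall>\<Theta> v. sym_mat d \<Theta> \<longrightarrow> Lnll d S n xs lam \<Theta>t vt \<le> Lnll d S n xs lam \<Theta> v" using T by blast
    qed
  qed
qed


end
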